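(* Let $d\le 3$ be a positive integer, let $\tau_1,\dots,\tau_d$ and $n_1,\dots,n_d$ be positive integers, and consider the generic $d$-degree polynomial multiparameter eigenvalue problem $P_i(x_1,\dots,x_d)\mathbf{v}_i=0$, $1\le i\le d$, where $P_i(x_1,\dots,x_d)=\sum_{i_1=0}^{\tau_1}\cdots\sum_{i_d=0}^{\tau_d}P^{(i)}_{i_1,\dots,i_d}x_1^{i_1}\cdots x_d^{i_d}$ and the entries of all the $n_i\times n_i$ coefficient matrices $P^{(i)}_{i_1,\dots,i_d}$ (over all $i$ and all multi-indices) are distinct indeterminates. Then the hidden variable tensor Dixon resultant $R(x_d)$ of this problem is nonsingular, i.e. $\det R(x_d)$ is not the zero polynomial.
   Context: Let $N=\prod_{i=1}^d n_i$. Kronecker block determinant: for a $d\times d$ array $M=(M_{ij})$ with $M_{ij}$ of size $n_i\times n_i$, $|M|_\otimes=\sum_{\sigma\in S_d}\mathrm{sgn}(\sigma)\,M_{1,\sigma(1)}\otimes\cdots\otimes M_{d,\sigma(d)}$. Tensor Dixon function (with $x_d$ hidden): with variables $s_1,\dots,s_{d-1},t_1,\dots,t_{d-1},x_d$, let $M_{ij}=P_i(t_1,\dots,t_{j-1},s_j,\dots,s_{d-1},x_d)$ for $1\le i,j\le d$, and $f_{\text{Dixon}}=|M|_\otimes/\prod_{i=1}^{d-1}(s_i-t_i)$ (for $d=1$, $f_{\text{Dixon}}=P_1(x_1)$), a matrix polynomial of degree at most $\alpha_i=i\tau_i-1$ in $s_i$ and at most $\beta_i=(d-i)\tau_i-1$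 in $t_i$. Expand $f_{\text{Dixon}}=\sum_{\mathbf{i},\mathbf{j}}A_{\mathbf{i},\mathbf{j}}(x_d)\prod_k s_k^{i_k}\prod_k t_k^{j_k}$ over $0\le i_k\le\alpha_k$, $0\le j_k\le\beta_k$. The hidden variable tensor Dixon resultant $R(x_d)$ is the square block matrix of size $N(d-1)!\prod_{k=1}^{d-1}\tau_k$ whose block columns (width $N$) are indexed by $s$-exponents $\mathbf{i}$ and block rows by $t$-exponents $\mathbf{j}$, with block $(\mathbf{j},\mathbf{i})$ equal to $A_{\mathbf{i},\mathbf{j}}(x_d)$; its entries are polynomials in $x_d$ and the indeterminates. *)

theory Defs
  imports "HOL-Library.Poly_Mapping" "HOL-Library.Nat_Bijection"
          "Jordan_Normal_Form.Determinant"
begin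

type_synonym mpoly = "(nat \<Rightarrow>\<^sub>0 nat) \<Rightarrow>\<^sub>0 complex"

definition mvar :: "nat \<Rightarrow> mpoly" where
  "mvar v = Poly_Mapping.single (Poly_Mapping.single v 1) 1"

text \<open>Encoding of the different kinds of indeterminates into nat (injective):
  the hidden variable x_d, the Dixon variables s_k, t_k, and the coefficient
  indeterminate for entry (r,c) of the coefficient matrix P^(i)_e, where the
  multi-index e = (i_1,...,i_d) is given as a list.\<close>
definition vX :: nat where "vX = prod_encode (0, 0)"
definition vS :: "nat \<Rightarrow> nat" where "vS k = prod_encode (1, k)"
definition vT :: "nat \<Rightarrow> nat" where "vT k = prod_encode (2, k)"
definition vC :: "nat \<Rightarrow> nat list \<Rightarrow> nat \<Rightarrow> nat \<Rightarrow> nat" where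
  "vC i e r c = prod_encode (3, list_encode [i, list_encode e, r, c])"

text \<open>Multi-indices (i_1,...,i_d) with 0 <= i_k <= tau_k (list position k-1 holds i_k).\<close>
definition multi_indices :: "nat \<Rightarrow> (nat \<Rightarrow> nat) \<Rightarrow> nat list set" where
  "multi_indices d \<tau> = {e. length e = d \<and> (\<forall>k<d. e ! k \<le> \<tau> (Suc k))}"

text \<open>P_i(y_1,...,y_d) with generic coefficient matrices; the arguments y_k are
  given as a list ys (position k-1 holds y_k). Indices i are 1-based.\<close>
definition Pgen :: "nat \<Rightarrow> (nat \<Rightarrow> nat) \<Rightarrow> (nat \<Rightarrow> nat) \<Rightarrow> nat \<Rightarrow> mpoly list \<Rightarrow> mpoly mat" where
  "Pgen d \<tau> n i ys = mat (n i) (n i) (\<lambda>(r, c).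
      \<Sum>e\<in>multi_indices d \<tau>. (\<Prod>k<d. (ys ! k) ^ (e ! k)) * mvar (vC i e r c))"

definition kron :: "'a::semiring_1 mat \<Rightarrow> 'a mat \<Rightarrow> 'a mat" where
  "kron A B = mat (dim_row A * dim_row B) (dim_col A * dim_col B)
     (\<lambda>(i, j). A $$ (i div dim_row B, j div dim_col B) * B $$ (i mod dim_row B, j mod dim_col B))"

definition kron_list :: "'a::semiring_1 mat list \<Rightarrow> 'a mat" where
  "kron_list As = foldr kron As (1\<^sub>m 1)"

text \<open>|M|_otimes for a d x d array M (0-based indices here), where block row i has
  size m i x m i; the result has size (prod of m i).\<close>
definition kron_block_det :: "nat \<Rightarrow> (nat \<Rightarrow> nat) \<Rightarrow> (nat \<Rightarrow> nat \<Rightarrow> 'a::comm_ring_1 mat) \<Rightarrow> 'a mat" where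
  "kron_block_det d m M = mat (\<Prod>i<d. m i) (\<Prod>i<d. m i) (\<lambda>ij.
      \<Sum>\<sigma> | \<sigma> permutes {..<d}. of_int (sign \<sigma>) * kron_list (map (\<lambda>i. M i (\<sigma> i)) [0..<d]) $$ ij)"

text \<open>M_{ij} = P_i(t_1,...,t_{j-1}, s_j,...,s_{d-1}, x_d), 1 <= i,j <= d
  (stored 0-based: Mdixon d tau n i' j' = M_{i'+1, j'+1}).\<close>
definition Mdixon :: "nat \<Rightarrow> (nat \<Rightarrow> nat) \<Rightarrow> (nat \<Rightarrow> nat) \<Rightarrow> nat \<Rightarrow> nat \<Rightarrow> mpoly mat" where
  "Mdixon d \<tau> n i j = Pgen d \<tau> n (Suc i)
     (map (\<lambda>k. if k < j then mvar (vT (Suc k)) else mvar (vS (Suc k))) [0..<d - 1] @ [mvar vX])"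

definition exact_div :: "mpoly \<Rightarrow> mpoly \<Rightarrow> mpoly" where
  "exact_div a b = (SOME q. a = q * b)"

definition Nsize :: "nat \<Rightarrow> (nat \<Rightarrow> nat) \<Rightarrow> nat" where
  "Nsize d n = (\<Prod>k\<in>{1..d}. n k)"

definition f_dixon :: "nat \<Rightarrow> (nat \<Rightarrow> nat) \<Rightarrow> (nat \<Rightarrow> nat) \<Rightarrow> mpoly mat" where
  "f_dixon d \<tau> n =
     (let B = kron_block_det d (\<lambda>i. n (Suc i)) (Mdixon d \<tau> n);
          D = (\<Prod>k\<in>{1..<d}. mvar (vS k) - mvar (vT k))
      in mat (dim_row B) (dim_col B) (\<lambda>ij. exact_div (B $$ ij) D))"

text \<open>Coefficient of s_1^{a 1}...s_{d-1}^{a (d-1)} t_1^{b 1}...t_{d-1}^{b (d-1)} in a polynomial p,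
  viewed as a polynomial in the s,t variables with coefficients polynomials in the
  remaining indeterminates (x_d and the coefficient indeterminates).\<close>
definition st_vars :: "nat \<Rightarrow> nat set" where
  "st_vars d = vS ` {1..<d} \<union> vT ` {1..<d}"

definition strip_st :: "nat \<Rightarrow> (nat \<Rightarrow>\<^sub>0 nat) \<Rightarrow> (nat \<Rightarrow>\<^sub>0 nat)" where
  "strip_st d m = (\<Sum>v\<in>Poly_Mapping.keys m - st_vars d. Poly_Mapping.single v (Poly_Mapping.lookup m v))"

definition coeff_st :: "nat \<Rightarrow> mpoly \<Rightarrow> (nat \<Rightarrow> nat) \<Rightarrow> (nat \<Rightarrow> nat) \<Rightarrow> mpoly" where
  "coeff_st d p a b = (\<Sum>m\<in>Poly_Mapping.keys p.
      if (\<forall>k\<in>{1..<d}. Poly_Mapping.lookup m (vS k) = a k \<and> Poly_Mapping.lookup m (vT k) = b k)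
      then Poly_Mapping.single (strip_st d m) (Poly_Mapping.lookup p m) else 0)"

text \<open>Degree bounds: alpha_k + 1 = k tau_k, beta_k + 1 = (d-k) tau_k.
  Exponent vectors are enumerated in mixed radix (exponent of the first variable
  varying fastest); q-th s-exponent vector and q-th t-exponent vector: \<close>
definition s_exp :: "nat \<Rightarrow> (nat \<Rightarrow> nat) \<Rightarrow> nat \<Rightarrow> nat \<Rightarrow> nat" where
  "s_exp d \<tau> q k = (q div (\<Prod>l\<in>{1..<k}. l * \<tau> l)) mod (k * \<tau> k)"

definition t_exp :: "nat \<Rightarrow> (nat \<Rightarrow> nat) \<Rightarrow> nat \<Rightarrow> nat \<Rightarrow> nat" where
  "t_exp d \<tau> q k = (q div (\<Prod>l\<in>{1..<k}. (d - l) * \<tau> l)) mod ((d - k) * \<tau> k)"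

text \<open>Number of block columns/rows: prod_k (alpha_k + 1) = (d-1)! prod_k tau_k.\<close>
definition nblocks :: "nat \<Rightarrow> (nat \<Rightarrow> nat) \<Rightarrow> nat" where
  "nblocks d \<tau> = (\<Prod>k\<in>{1..<d}. k * \<tau> k)"

text \<open>Hidden variable tensor Dixon resultant: block (j,i) (block row = t-exponent j,
  block column = s-exponent i) is A_{i,j}(x_d).\<close>
definition dixon_resultant :: "nat \<Rightarrow> (nat \<Rightarrow> nat) \<Rightarrow> (nat \<Rightarrow> nat) \<Rightarrow> mpoly mat" where
  "dixon_resultant d \<tau> n =
     (let N = Nsize d n; F = f_dixon d \<tau> n; K = nblocks d \<tau>
      in mat (K * N) (K * N) (\<lambda>(r, c).
           coeff_st d (F $$ (r mod N, c mod N)) (s_exp d \<tau> (c div N)) (t_exp d \<tau> (r div N))))"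

end

theory Submission
  imports Defs "HOL-Combinatorics.Permutations"
begin

definition lin :: "((nat \<Rightarrow>\<^sub>0 nat) \<Rightarrow> complex \<Rightarrow> mpoly) \<Rightarrow> mpoly \<Rightarrow> mpoly" where
  "lin f p = (\<Sum>m\<in>Poly_Mapping.keys p. f m (Poly_Mapping.lookup p m))"

definition linear_coeff :: "((nat \<Rightarrow>\<^sub>0 nat) \<Rightarrow> complex \<Rightarrow> mpoly) \<Rightarrow> bool" where
  "linear_coeff f \<longleftrightarrow> (\<forall>m. f m 0 = 0) \<and> (\<forall>m a b. f m (a + b) = f m a + f m b)"

lemma lin_superset:
  assumes "linear_coeff f" "finite K" "Poly_Mapping.keys p \<subseteq> K"
  shows "lin f p = (\<Sum>m\<in>K. f m (Poly_Mapping.lookup p m))"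
  unfolding lin_def
  by (rule sum.mono_neutral_left) (use assms in \<open>auto simp: linear_coeff_def in_keys_iff\<close>)

lemma lin_add:
  assumes "linear_coeff f"
  shows "lin f (p + q) = lin f p + lin f q"
proof -
  let ?K = "Poly_Mapping.keys p \<union> Poly_Mapping.keys q"
  have k: "Poly_Mapping.keys (p + q) \<subseteq> ?K" by (rule keys_add)
  have "lin f (p + q) = (\<Sum>m\<in>?K. f m (Poly_Mapping.lookup (p + q) m))"
    by (rule lin_superset[OF assms _ k]) simp
  also have "\<dots> = (\<Sum>m\<in>?K. f m (Poly_Mapping.lookup p m)) + (\<Sum>m\<in>?K. f m (Poly_Mapping.lookup q m))"
    using assms by (simp add: lookup_add linear_coeff_def sum.distrib)
  also have "\<dots> = lin f p + lin f q"
    by (subst (1 2) lin_superset[OF assms]) auto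
  finally show ?thesis .
qed

lemma lin_zero: "lin f 0 = 0"
  by (simp add: lin_def)

lemma lin_single:
  assumes "linear_coeff f"
  shows "lin f (Poly_Mapping.single m c) = f m c"
  using assms by (cases "c = 0") (auto simp: lin_def linear_coeff_def)

lemma lin_sum:
  assumes "linear_coeff f"
  shows "lin f (sum g A) = (\<Sum>a\<in>A. lin f (g a))"
  by (induction A rule: infinite_finite_induct) (auto simp: lin_zero lin_add[OF assms])

lemma poly_expand:
  "(p::'a \<Rightarrow>\<^sub>0 'b::comm_monoid_add) = (\<Sum>m\<in>Poly_Mapping.keys p. Poly_Mapping.single m (Poly_Mapping.lookup p m))"
proof (rule poly_mapping_eqI)
  fix k
  have "Poly_Mapping.lookup (\<Sum>m\<in>Poly_Mapping.keys p. Poly_Mapping.single m (Poly_Mapping.lookup p m)) k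
      = (\<Sum>m\<in>Poly_Mapping.keys p. (Poly_Mapping.lookup p m when m = k))"
    by (simp add: lookup_sum lookup_single)
  also have "\<dots> = Poly_Mapping.lookup p k"
    by (cases "k \<in> Poly_Mapping.keys p") (auto simp: when_def in_keys_iff)
  finally show "Poly_Mapping.lookup p k = Poly_Mapping.lookup (\<Sum>m\<in>Poly_Mapping.keys p. Poly_Mapping.single m (Poly_Mapping.lookup p m)) k" ..
qed

section \<open>The specialisation homomorphism: kill some variables, set others to one\<close>

definition okm :: "nat set \<Rightarrow> (nat \<Rightarrow>\<^sub>0 nat) \<Rightarrow> bool" where
  "okm Zs m \<longleftrightarrow> (\<forall>v\<in>Zs. Poly_Mapping.lookup m v = 0)"

definition erm :: "nat set \<Rightarrow> (nat \<Rightarrow>\<^sub>0 nat) \<Rightarrow> (nat \<Rightarrow>\<^sub>0 nat)" where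
  "erm Os m = Poly_Mapping.mapp (\<lambda>v x. if v \<in> Os then 0 else x) m"

lemma lookup_erm: "Poly_Mapping.lookup (erm Os m) v = (if v \<in> Os then 0 else Poly_Mapping.lookup m v)"
  by (auto simp: erm_def lookup_mapp when_def in_keys_iff)

lemma erm_add: "erm Os (m1 + m2) = erm Os m1 + erm Os m2"
  by (rule poly_mapping_eqI) (simp add: lookup_erm lookup_add)

lemma erm_zero: "erm Os 0 = 0"
  by (rule poly_mapping_eqI) (simp add: lookup_erm)

lemma okm_add: "okm Zs (m1 + m2) \<longleftrightarrow> okm Zs m1 \<and> okm Zs m2"
  by (auto simp: okm_def lookup_add)

definition phif :: "nat set \<Rightarrow> nat set \<Rightarrow> (nat \<Rightarrow>\<^sub>0 nat) \<Rightarrow> complex \<Rightarrow> mpoly" where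
  "phif Zs Os m c = (if okm Zs m then Poly_Mapping.single (erm Os m) c else 0)"

definition phi :: "nat set \<Rightarrow> nat set \<Rightarrow> mpoly \<Rightarrow> mpoly" where
  "phi Zs Os = lin (phif Zs Os)"

lemma linear_phif: "linear_coeff (phif Zs Os)"
  by (simp add: linear_coeff_def phif_def single_add)

lemma phi_single: "phi Zs Os (Poly_Mapping.single m c) = phif Zs Os m c"
  by (simp add: phi_def lin_single[OF linear_phif])

lemma phi_add: "phi Zs Os (p + q) = phi Zs Os p + phi Zs Os q"
  by (simp add: phi_def lin_add[OF linear_phif])

lemma phi_sum: "phi Zs Os (sum g A) = (\<Sum>a\<in>A. phi Zs Os (g a))"
  by (simp add: phi_def lin_sum[OF linear_phif])

lemma phif_mult: "phif Zs Os (m1 + m2) (a * b) = phif Zs Os m1 a * phif Zs Os m2 b"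
  by (simp add: phif_def okm_add erm_add mult_single)

lemma phi_mult: "phi Zs Os (p * q) = phi Zs Os p * phi Zs Os q"
proof -
  let ?P = "Poly_Mapping.keys p" and ?Q = "Poly_Mapping.keys q"
  let ?a = "Poly_Mapping.lookup p" and ?b = "Poly_Mapping.lookup q"
  have "p * q = (\<Sum>m\<in>?P. Poly_Mapping.single m (?a m)) * (\<Sum>m'\<in>?Q. Poly_Mapping.single m' (?b m'))"
    by (subst (1) poly_expand[of p], subst (1) poly_expand[of q]) (rule refl)
  also have "\<dots> = (\<Sum>m\<in>?P. \<Sum>m'\<in>?Q. Poly_Mapping.single (m + m') (?a m * ?b m'))"
    by (simp add: sum_distrib_left sum_distrib_right mult_single sum.swap[of _ ?Q])
  finally have pq: "p * q = \<dots>" .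
  have "phi Zs Os (p * q) = (\<Sum>m\<in>?P. \<Sum>m'\<in>?Q. phif Zs Os m (?a m) * phif Zs Os m' (?b m'))"
    unfolding pq phi_sum phi_single phif_mult ..
  also have "\<dots> = (\<Sum>m\<in>?P. phif Zs Os m (?a m)) * (\<Sum>m'\<in>?Q. phif Zs Os m' (?b m'))"
    by (rule sum_product[symmetric])
  also have "\<dots> = phi Zs Os p * phi Zs Os q"
    by (simp add: phi_def lin_def)
  finally show ?thesis .
qed

lemma phi_one: "phi Zs Os 1 = 1"
proof -
  have "phi Zs Os (Poly_Mapping.single 0 1) = 1"
    unfolding phi_single phif_def by (simp add: okm_def erm_zero)
  then show ?thesis by simp
qed

interpretation phi_hom: comm_ring_hom "phi Zs Os"
  by unfold_locales (auto simp only: phi_add phi_mult phi_one, simp add: phi_def lin_zero)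

lemma phi_mvar: "phi Zs Os (mvar v) = (if v \<in> Zs then 0 else if v \<in> Os then 1 else mvar v)"
proof -
  have e: "erm Os (Poly_Mapping.single v 1) = (if v \<in> Os then 0 else Poly_Mapping.single v 1)"
    by (rule poly_mapping_eqI) (auto simp: lookup_erm lookup_single when_def)
  have o: "okm Zs (Poly_Mapping.single v 1) \<longleftrightarrow> v \<notin> Zs"
    by (auto simp: okm_def lookup_single when_def)
  show ?thesis
    unfolding mvar_def phi_single phif_def e o by simp
qed


definition condst :: "nat \<Rightarrow> (nat \<Rightarrow> nat) \<Rightarrow> (nat \<Rightarrow> nat) \<Rightarrow> (nat \<Rightarrow>\<^sub>0 nat) \<Rightarrow> bool" where
  "condst d a b m \<longleftrightarrow> (\<forall>k\<in>{1..<d}. Poly_Mapping.lookup m (vS k) = a k \<and> Poly_Mapping.lookup m (vT k) = b k)"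

definition cf :: "nat \<Rightarrow> (nat \<Rightarrow> nat) \<Rightarrow> (nat \<Rightarrow> nat) \<Rightarrow> (nat \<Rightarrow>\<^sub>0 nat) \<Rightarrow> complex \<Rightarrow> mpoly" where
  "cf d a b m c = (if condst d a b m then Poly_Mapping.single (strip_st d m) c else 0)"

lemma coeff_st_lin: "coeff_st d p a b = lin (cf d a b) p"
  unfolding coeff_st_def lin_def cf_def condst_def ..

lemma linear_cf: "linear_coeff (cf d a b)"
  by (simp add: linear_coeff_def cf_def single_add)

lemma coeff_st_add: "coeff_st d (p + q) a b = coeff_st d p a b + coeff_st d q a b"
  by (simp add: coeff_st_lin lin_add[OF linear_cf])

lemma coeff_st_sum: "coeff_st d (sum g A) a b = (\<Sum>x\<in>A. coeff_st d (g x) a b)"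
  by (simp add: coeff_st_lin lin_sum[OF linear_cf])

lemma coeff_st_single: "coeff_st d (Poly_Mapping.single m c) a b = cf d a b m c"
  by (simp add: coeff_st_lin lin_single[OF linear_cf])

lemma coeff_st_zero: "coeff_st d 0 a b = 0"
  by (simp add: coeff_st_lin lin_zero)

lemma coeff_st_uminus: "coeff_st d (- p) a b = - coeff_st d p a b"
proof -
  have "coeff_st d p a b + coeff_st d (- p) a b = 0"
    using coeff_st_add[of d p "-p" a b] by (simp add: coeff_st_zero)
  then show ?thesis by (metis add.commute eq_neg_iff_add_eq_0)
qed

lemma coeff_st_diff: "coeff_st d (p - q) a b = coeff_st d p a b - coeff_st d q a b"
  using coeff_st_add[of d p "-q" a b] by (simp add: coeff_st_uminus)

lemma lookup_strip_st:
  "Poly_Mapping.lookup (strip_st d m) v = (if v \<in> st_vars d then 0 else Poly_Mapping.lookup m v)"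
proof -
  have "Poly_Mapping.lookup (strip_st d m) v =
      (\<Sum>u\<in>Poly_Mapping.keys m - st_vars d. (Poly_Mapping.lookup m u when u = v))"
    by (simp add: strip_st_def lookup_sum lookup_single)
  also have "\<dots> = (if v \<in> st_vars d then 0 else Poly_Mapping.lookup m v)"
    by (cases "v \<in> Poly_Mapping.keys m - st_vars d") (auto simp: when_def in_keys_iff)
  finally show ?thesis .
qed

lemma phi_coeff_st:
  assumes "Zs \<inter> st_vars d = {}" "Os \<inter> st_vars d = {}"
  shows "phi Zs Os (coeff_st d p a b) = coeff_st d (phi Zs Os p) a b"
proof -
  have st: "vS k \<in> st_vars d" "vT k \<in> st_vars d" if "k \<in> {1..<d}" for k
    using that by (auto simp: st_vars_def)
  have c1: "condst d a b (erm Os m) \<longleftrightarrow> condst d a b m" for m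
    using st assms(2) by (auto simp: condst_def lookup_erm)
  have c2: "okm Zs (strip_st d m) \<longleftrightarrow> okm Zs m" for m
    using assms(1) by (auto simp: okm_def lookup_strip_st)
  have c3: "strip_st d (erm Os m) = erm Os (strip_st d m)" for m
    by (rule poly_mapping_eqI) (simp add: lookup_strip_st lookup_erm)
  have trm: "phi Zs Os (cf d a b m c) = coeff_st d (phif Zs Os m c) a b" for m c
    by (simp add: cf_def phif_def phi_single coeff_st_single coeff_st_zero c1 c2 c3 phi_hom.hom_zero)
  have "phi Zs Os (coeff_st d p a b) = (\<Sum>m\<in>Poly_Mapping.keys p. phi Zs Os (cf d a b m (Poly_Mapping.lookup p m)))"
    unfolding coeff_st_lin lin_def by (rule phi_hom.hom_sum)
  also have "\<dots> = (\<Sum>m\<in>Poly_Mapping.keys p. coeff_st d (phif Zs Os m (Poly_Mapping.lookup p m)) a b)"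
    by (simp add: trm)
  also have "\<dots> = coeff_st d (phi Zs Os p) a b"
    by (simp add: coeff_st_sum phi_def lin_def)
  finally show ?thesis .
qed


section \<open>Signed permutation matrices are nonsingular\<close>

lemma perm_like_det_nonzero:
  fixes A :: "'a::comm_ring_1 mat"
  assumes A: "A \<in> carrier_mat M M"
    and entries: "\<And>r c. r < M \<Longrightarrow> c < M \<Longrightarrow> A $$ (r, c) = (if c = cl r then e r else 0)"
    and colM: "\<And>r. r < M \<Longrightarrow> cl r < M"
    and inj: "inj_on cl {..<M}"
    and e: "\<And>r. r < M \<Longrightarrow> e r * e r = 1"
  shows "det A \<noteq> 0"
proof -
  have prod: "A * transpose_mat A = 1\<^sub>m M"
  proof (rule eq_matI)
    fix i j assume i: "i < dim_row (1\<^sub>m M)" and j: "j < dim_col (1\<^sub>m M)"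
    then have iM: "i < M" and jM: "j < M" by auto
    have "(A * transpose_mat A) $$ (i, j) = (\<Sum>k\<in>{0..<M}. A $$ (i, k) * A $$ (j, k))"
      using A iM jM by (simp add: scalar_prod_def)
    also have "\<dots> = (\<Sum>k\<in>{0..<M}. if k = cl i then e i * A $$ (j, k) else 0)"
      by (rule sum.cong) (auto simp: entries iM)
    also have "\<dots> = e i * A $$ (j, cl i)"
      using colM[OF iM] by simp
    also have "\<dots> = (if i = j then 1 else 0)"
    proof (cases "i = j")
      case True then show ?thesis using entries[OF jM colM[OF jM]] e[OF jM] by simp
    next
      case False
      then have "cl i \<noteq> cl j" using inj iM jM by (auto simp: inj_on_def)
      then show ?thesis using entries[OF jM colM[OF iM]] False by simp
    qed
    finally show "(A * transpose_mat A) $$ (i, j) = 1\<^sub>m M $$ (i, j)"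
      using iM jM by simp
  qed (use A in auto)
  have "det A * det (transpose_mat A) = 1"
    using det_mult[OF A, of "transpose_mat A"] A prod by auto
  then show ?thesis by auto
qed

lemma dims_kron_block_det:
  "dim_row (kron_block_det d m M) = (\<Prod>i<d. m i)" "dim_col (kron_block_det d m M) = (\<Prod>i<d. m i)"
  by (simp_all add: kron_block_det_def)

lemma Nsize_alt: "Nsize d n = (\<Prod>i<d. n (Suc i))"
  unfolding Nsize_def by (simp add: prod.atLeast1_atMost_eq)

lemma reduction:
  fixes d :: nat and \<tau> n :: "nat \<Rightarrow> nat" and Zs Os :: "nat set" and \<delta> :: mpoly
    and \<sigma> :: "nat \<Rightarrow> nat" and \<epsilon> :: "nat \<Rightarrow> mpoly"
  defines "B \<equiv> kron_block_det d (\<lambda>i. n (Suc i)) (Mdixon d \<tau> n)"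
    and "D \<equiv> (\<Prod>k\<in>{1..<d}. mvar (vS k) - mvar (vT k))"
    and "N \<equiv> Nsize d n" and "K \<equiv> nblocks d \<tau>"
  assumes H1: "\<And>i j. i < N \<Longrightarrow> j < N \<Longrightarrow> \<exists>q. B $$ (i, j) = q * D"
    and H2: "\<And>i j. i < N \<Longrightarrow> j < N \<Longrightarrow> phi Zs Os (B $$ (i, j)) = (if i = j then \<delta> else 0) * D"
    and H3: "phi Zs Os D = D" "D \<noteq> 0"
    and H4: "Zs \<inter> st_vars d = {}" "Os \<inter> st_vars d = {}"
    and H5: "\<And>cb rb. cb < K \<Longrightarrow> rb < K \<Longrightarrow>
               coeff_st d \<delta> (s_exp d \<tau> cb) (t_exp d \<tau> rb) = (if cb = \<sigma> rb then \<epsilon> rb else 0)"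
    and H6: "\<And>rb. rb < K \<Longrightarrow> \<sigma> rb < K" "inj_on \<sigma> {..<K}" "\<And>rb. rb < K \<Longrightarrow> \<epsilon> rb * \<epsilon> rb = 1"
  shows "det (dixon_resultant d \<tau> n) \<noteq> 0"
proof -
  have dimB: "dim_row B = N" "dim_col B = N"
    by (simp_all add: B_def N_def dims_kron_block_det Nsize_alt)
  define F where "F = f_dixon d \<tau> n"
  have dimF: "dim_row F = N" "dim_col F = N"
    using dimB by (simp_all add: F_def f_dixon_def Let_def B_def D_def)
  have Fij: "F $$ (i, j) = exact_div (B $$ (i, j)) D" if "i < N" "j < N" for i j
    using that dimB by (simp add: F_def f_dixon_def Let_def B_def D_def)
  have phiF: "phi Zs Os (F $$ (i, j)) = (if i = j then \<delta> else 0)" if ij: "i < N" "j < N" for i j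
  proof -
    have ex: "\<exists>q. B $$ (i, j) = q * D" using H1[OF ij] .
    have Bq: "B $$ (i, j) = F $$ (i, j) * D"
      unfolding Fij[OF ij] exact_div_def by (rule someI_ex[OF ex])
    have "phi Zs Os (B $$ (i, j)) = phi Zs Os (F $$ (i, j)) * D"
      by (subst Bq) (simp only: phi_hom.hom_mult H3(1))
    then have "phi Zs Os (F $$ (i, j)) * D = (if i = j then \<delta> else 0) * D"
      by (rule trans[OF sym H2[OF ij]])
    then show ?thesis by (rule mult_right_cancel[THEN iffD1, OF H3(2)])
  qed
  define R where "R = dixon_resultant d \<tau> n"
  have Npos: "0 < N" if "0 < K * N" using that by simp
  have R_carrier: "R \<in> carrier_mat (K * N) (K * N)"
    by (simp add: R_def dixon_resultant_def Let_def K_def N_def)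
  have R_entry: "R $$ (r, c) = coeff_st d (F $$ (r mod N, c mod N)) (s_exp d \<tau> (c div N)) (t_exp d \<tau> (r div N))"
    if "r < K * N" "c < K * N" for r c
    using that by (simp add: R_def dixon_resultant_def Let_def K_def N_def F_def)
  define cl where "cl r = \<sigma> (r div N) * N + r mod N" for r
  define e where "e r = \<epsilon> (r div N)" for r
  let ?A = "map_mat (phi Zs Os) R"
  have A_carrier: "?A \<in> carrier_mat (K * N) (K * N)" using R_carrier by simp
  have divK: "r div N < K" if "r < K * N" for r
    using that by (simp add: less_mult_imp_div_less mult.commute)
  have modN: "r mod N < N" if "r < K * N" for r
  proof -
    have "N \<noteq> 0" using that by (cases "N = 0") auto
    then show ?thesis by simp
  qed
  have A_entry: "?A $$ (r, c) = (if c = cl r then e r else 0)"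
    if rc: "r < K * N" "c < K * N" for r c
  proof -
    have "?A $$ (r, c) = phi Zs Os (R $$ (r, c))" using R_carrier rc by simp
    also have "\<dots> = coeff_st d (phi Zs Os (F $$ (r mod N, c mod N))) (s_exp d \<tau> (c div N)) (t_exp d \<tau> (r div N))"
      by (simp add: R_entry[OF rc] phi_coeff_st[OF H4])
    also have "\<dots> = (if r mod N = c mod N then coeff_st d \<delta> (s_exp d \<tau> (c div N)) (t_exp d \<tau> (r div N)) else 0)"
      by (simp add: phiF[OF modN modN] rc coeff_st_zero)
    also have "\<dots> = (if r mod N = c mod N \<and> c div N = \<sigma> (r div N) then \<epsilon> (r div N) else 0)"
      using H5[OF divK[OF rc(2)] divK[OF rc(1)]] by auto
    also have "\<dots> = (if c = cl r then e r else 0)"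
    proof -
      have "(r mod N = c mod N \<and> c div N = \<sigma> (r div N)) \<longleftrightarrow> c = cl r"
      proof
        assume h: "r mod N = c mod N \<and> c div N = \<sigma> (r div N)"
        show "c = cl r" unfolding cl_def using h by (metis div_mult_mod_eq)
      next
        assume h: "c = cl r"
        have N0: "0 < N" using rc(1) by (cases "N = 0") auto
        show "r mod N = c mod N \<and> c div N = \<sigma> (r div N)"
          unfolding h cl_def using N0 by simp
      qed
      then show ?thesis by (simp add: e_def)
    qed
    finally show ?thesis .
  qed
  have colM: "cl r < K * N" if "r < K * N" for r
  proof -
    have "\<sigma> (r div N) < K" using H6(1)[OF divK[OF that]] .
    then have "\<sigma> (r div N) + 1 \<le> K" by simp
    then have "(\<sigma> (r div N) + 1) * N \<le> K * N" by (rule mult_right_mono) simp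
    then show ?thesis using modN[OF that] by (simp add: cl_def algebra_simps)
  qed
  have inj: "inj_on cl {..<K * N}"
  proof (rule inj_onI)
    fix r1 r2 assume r1: "r1 \<in> {..<K * N}" and r2: "r2 \<in> {..<K * N}" and eq: "cl r1 = cl r2"
    have m1: "r1 mod N < N" and m2: "r2 mod N < N" using r1 r2 modN by auto
    have "cl r1 mod N = r1 mod N" "cl r2 mod N = r2 mod N"
      using m1 m2 by (simp_all add: cl_def)
    then have mm: "r1 mod N = r2 mod N" using eq by simp
    have "cl r1 div N = \<sigma> (r1 div N)" "cl r2 div N = \<sigma> (r2 div N)"
      using m1 m2 by (simp_all add: cl_def)
    then have "\<sigma> (r1 div N) = \<sigma> (r2 div N)" using eq by simp
    then have "r1 div N = r2 div N" using H6(2) divK r1 r2 by (auto simp: inj_on_def)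
    then show "r1 = r2" using mm by (metis div_mult_mod_eq)
  qed
  have "det ?A \<noteq> 0"
    by (rule perm_like_det_nonzero[OF A_carrier A_entry colM inj]) (auto simp: e_def H6(3) divK)
  then have "phi Zs Os (det R) \<noteq> 0" by simp
  then show ?thesis unfolding R_def by auto
qed


section \<open>Entries of iterated Kronecker products\<close>

fun kentry :: "'a::semiring_1 mat list \<Rightarrow> nat \<Rightarrow> nat \<Rightarrow> 'a" where
  "kentry [] i j = 1"
| "kentry (A # As) i j =
     A $$ (i div prod_list (map dim_row As), j div prod_list (map dim_row As)) *
     kentry As (i mod prod_list (map dim_row As)) (j mod prod_list (map dim_row As))"

lemma kron_list_props:
  assumes "\<forall>A\<in>set As. dim_col A = dim_row A"
  shows "dim_row (kron_list As) = prod_list (map dim_row As) \<and>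
         dim_col (kron_list As) = prod_list (map dim_row As) \<and>
         (\<forall>i j. i < prod_list (map dim_row As) \<longrightarrow> j < prod_list (map dim_row As) \<longrightarrow>
            kron_list As $$ (i, j) = kentry As i j)"
  using assms
proof (induction As)
  case Nil
  then show ?case by (simp add: kron_list_def)
next
  case (Cons A As)
  let ?P = "prod_list (map dim_row As)"
  have IH: "dim_row (kron_list As) = ?P" "dim_col (kron_list As) = ?P"
    "\<And>i j. i < ?P \<Longrightarrow> j < ?P \<Longrightarrow> kron_list As $$ (i, j) = kentry As i j"
    using Cons by auto
  have kl: "kron_list (A # As) = kron A (kron_list As)" by (simp add: kron_list_def)
  have dA: "dim_col A = dim_row A" using Cons.prems by simp
  show ?case
  proof (intro conjI allI impI)
    show "dim_row (kron_list (A # As)) = prod_list (map dim_row (A # As))"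
      by (simp add: kl kron_def IH)
    show "dim_col (kron_list (A # As)) = prod_list (map dim_row (A # As))"
      by (simp add: kl kron_def IH dA)
    fix i j assume i: "i < prod_list (map dim_row (A # As))" and j: "j < prod_list (map dim_row (A # As))"
    have "i < dim_row A * ?P" using i by simp
    then have P0: "?P \<noteq> 0" by (cases "?P = 0") auto
    have "kron_list (A # As) $$ (i, j) =
       A $$ (i div ?P, j div ?P) * kron_list As $$ (i mod ?P, j mod ?P)"
      using i j by (simp add: kl kron_def IH dA)
    also have "\<dots> = kentry (A # As) i j"
    proof -
      have "i mod ?P < ?P" "j mod ?P < ?P" by (meson P0 mod_less_divisor neq0_conv)+
      then show ?thesis by (simp only: IH(3) kentry.simps)
    qed
    finally show "kron_list (A # As) $$ (i, j) = kentry (A # As) i j" .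
  qed
qed

section \<open>Sums over small permutation groups\<close>

lemma perm_sum_1:
  fixes f :: "nat \<Rightarrow> 'a::comm_ring_1"
  shows "(\<Sum>\<sigma> | \<sigma> permutes {..<1::nat}. of_int (sign \<sigma>) * f (\<sigma> 0)) = f 0"
proof -
  have "{..<1::nat} = {0}" by auto
  then show ?thesis by (simp add: permutes_sing sign_id)
qed

lemma perm_sum_2:
  fixes f :: "nat \<Rightarrow> nat \<Rightarrow> 'a::comm_ring_1"
  shows "(\<Sum>\<sigma> | \<sigma> permutes {..<2::nat}. of_int (sign \<sigma>) * f (\<sigma> 0) (\<sigma> 1)) = f 0 1 - f 1 0"
proof -
  have e: "{..<2::nat} = insert 0 {1}" by auto
  have f1: "finite {1::nat}" "0 \<notin> {1::nat}" by auto
  show ?thesis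
    unfolding e sum_over_permutations_insert[OF f1] permutes_sing
    by (simp add: sign_swap_id sign_id)
qed

lemma perm_sum_3:
  fixes f :: "nat \<Rightarrow> nat \<Rightarrow> nat \<Rightarrow> 'a::comm_ring_1"
  shows "(\<Sum>\<sigma> | \<sigma> permutes {..<3::nat}. of_int (sign \<sigma>) * f (\<sigma> 0) (\<sigma> 1) (\<sigma> 2)) =
     f 0 1 2 - f 0 2 1 - f 1 0 2 + f 1 2 0 + f 2 0 1 - f 2 1 0"
proof -
  have e: "{..<3::nat} = insert 0 {1, 2}" by auto
  have f1: "finite {1::nat, 2}" "0 \<notin> {1::nat, 2}" by auto
  have f2: "finite {2::nat}" "1 \<notin> {2::nat}" by auto
  show ?thesis
    unfolding e sum_over_permutations_insert[OF f1] sum_over_permutations_insert[OF f2] permutes_sing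
    by (simp add: sign_swap_id permutation_swap_id sign_compose sign_id algebra_simps)
qed


lemma vC_eq: "vC i e r c = vC i' e' r' c' \<longleftrightarrow> i = i' \<and> e = e' \<and> r = r' \<and> c = c'"
  by (auto simp: vC_def list_encode_eq)

lemma vC_ne: "vC i e r c \<noteq> vS k" "vC i e r c \<noteq> vT k" "vC i e r c \<noteq> vX"
  by (auto simp: vC_def vS_def vT_def vX_def)

lemma v_ne: "vS k \<noteq> vT l" "vS k \<noteq> vX" "vT k \<noteq> vX"
  by (auto simp: vS_def vT_def vX_def)

lemma v_eq: "vS k = vS l \<longleftrightarrow> k = l" "vT k = vT l \<longleftrightarrow> k = l"
  by (auto simp: vS_def vT_def)

definition Osf :: "(nat \<times> nat list) set \<Rightarrow> nat set" where
  "Osf E = {vC i e r r | i e r. (i, e) \<in> E}"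

definition Zsf :: "(nat \<times> nat list) set \<Rightarrow> nat set" where
  "Zsf E = {vC i e r c | i e r c. \<not> ((i, e) \<in> E \<and> r = c)}"

abbreviation "phiE E \<equiv> phi (Zsf E) (Osf E)"

lemma phi_vC: "phiE E (mvar (vC i e r c)) = (if (i, e) \<in> E \<and> r = c then 1 else 0)"
  by (auto simp: phi_mvar Zsf_def Osf_def vC_eq)

lemma phi_vS: "phiE E (mvar (vS k)) = mvar (vS k)"
  and phi_vT: "phiE E (mvar (vT k)) = mvar (vT k)"
  and phi_vX: "phiE E (mvar vX) = mvar vX"
  by (auto simp: phi_mvar Zsf_def Osf_def vC_ne vC_ne[symmetric])

lemma ZO_st: "Zsf E \<inter> st_vars d = {}" "Osf E \<inter> st_vars d = {}"
  by (auto simp: Zsf_def Osf_def st_vars_def vC_ne)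

section \<open>The entries of the Dixon array\<close>

definition ysl :: "nat \<Rightarrow> nat \<Rightarrow> mpoly list" where
  "ysl d j = map (\<lambda>k. if k < j then mvar (vT (Suc k)) else mvar (vS (Suc k))) [0..<d - 1] @ [mvar vX]"

lemma ysl_nth:
  assumes "1 \<le> d" "l < d"
  shows "ysl d j ! l = (if l = d - 1 then mvar vX else if l < j then mvar (vT (Suc l)) else mvar (vS (Suc l)))"
  using assms by (auto simp: ysl_def nth_append)

lemma phi_ysl:
  assumes "1 \<le> d" "l < d"
  shows "phiE E (ysl d j ! l) = ysl d j ! l"
  using assms by (simp add: ysl_nth phi_vS phi_vT phi_vX)

lemma Mdixon_carrier: "Mdixon d \<tau> n k j \<in> carrier_mat (n (Suc k)) (n (Suc k))"
  by (simp add: Mdixon_def Pgen_def)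

lemma Mdixon_entry:
  assumes "a < n (Suc k)" "b < n (Suc k)"
  shows "Mdixon d \<tau> n k j $$ (a, b) =
    (\<Sum>e\<in>multi_indices d \<tau>. (\<Prod>l<d. (ysl d j ! l) ^ (e ! l)) * mvar (vC (Suc k) e a b))"
  using assms by (simp add: Mdixon_def Pgen_def ysl_def)

lemma finite_MI: "finite (multi_indices d \<tau>)"
proof -
  let ?M = "\<Sum>k<d. \<tau> (Suc k)"
  have "multi_indices d \<tau> \<subseteq> {xs. set xs \<subseteq> {..?M} \<and> length xs = d}"
  proof
    fix e assume e: "e \<in> multi_indices d \<tau>"
    have "x \<le> ?M" if "x \<in> set e" for x
    proof -
      obtain k where k: "k < length e" "e ! k = x" using \<open>x \<in> set e\<close> by (auto simp: in_set_conv_nth)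
      have "x \<le> \<tau> (Suc k)" using e k by (auto simp: multi_indices_def)
      also have "\<tau> (Suc k) \<le> ?M"
        using k e by (intro member_le_sum) (auto simp: multi_indices_def)
      finally show ?thesis .
    qed
    then show "e \<in> {xs. set xs \<subseteq> {..?M} \<and> length xs = d}" using e by (auto simp: multi_indices_def)
  qed
  then show ?thesis by (rule finite_subset) (rule finite_lists_length_eq, simp)
qed

lemma dvd_prod_diff:
  fixes ys ys' :: "'a::comm_ring_1 list"
  assumes "j < d" "\<And>l. l < d \<Longrightarrow> l \<noteq> j \<Longrightarrow> ys ! l = ys' ! l"
  shows "(ys ! j - ys' ! j) dvd ((\<Prod>l<d. (ys ! l) ^ (f l)) - (\<Prod>l<d. (ys' ! l) ^ (f l)))"
proof -
  have j: "j \<in> {..<d}" using assms(1) by simp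
  have r: "(\<Prod>l\<in>{..<d} - {j}. (ys ! l) ^ (f l)) = (\<Prod>l\<in>{..<d} - {j}. (ys' ! l) ^ (f l))"
    using assms(2) by (intro prod.cong) auto
  have "(\<Prod>l<d. (ys ! l) ^ (f l)) - (\<Prod>l<d. (ys' ! l) ^ (f l)) =
     ((ys ! j) ^ f j - (ys' ! j) ^ f j) * (\<Prod>l\<in>{..<d} - {j}. (ys' ! l) ^ (f l))"
    by (simp add: prod.remove[OF _ j] r algebra_simps)
  moreover have "(ys ! j - ys' ! j) dvd ((ys ! j) ^ f j - (ys' ! j) ^ f j)"
    by (simp add: power_diff_sumr2)
  ultimately show ?thesis by simp
qed

lemma Mdixon_dvd:
  assumes d: "1 \<le> d" and j: "Suc j < d" and ab: "a < n (Suc k)" "b < n (Suc k)"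
  shows "(mvar (vS (Suc j)) - mvar (vT (Suc j))) dvd
          (Mdixon d \<tau> n k j $$ (a, b) - Mdixon d \<tau> n k (Suc j) $$ (a, b))"
proof -
  have y1: "ysl d j ! j = mvar (vS (Suc j))" "ysl d (Suc j) ! j = mvar (vT (Suc j))"
    using d j by (auto simp: ysl_nth)
  have yo: "ysl d j ! l = ysl d (Suc j) ! l" if "l < d" "l \<noteq> j" for l
    using d that by (auto simp: ysl_nth)
  have dv: "(mvar (vS (Suc j)) - mvar (vT (Suc j))) dvd
      ((\<Prod>l<d. (ysl d j ! l) ^ (e ! l)) - (\<Prod>l<d. (ysl d (Suc j) ! l) ^ (e ! l)))" for e
    using dvd_prod_diff[of j d "ysl d j" "ysl d (Suc j)" "\<lambda>l. e ! l"] j yo y1 by simp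
  have "Mdixon d \<tau> n k j $$ (a, b) - Mdixon d \<tau> n k (Suc j) $$ (a, b) =
     (\<Sum>e\<in>multi_indices d \<tau>. ((\<Prod>l<d. (ysl d j ! l) ^ (e ! l)) - (\<Prod>l<d. (ysl d (Suc j) ! l) ^ (e ! l)))
         * mvar (vC (Suc k) e a b))"
    by (simp add: Mdixon_entry[of a n k b, OF ab] sum_subtractf left_diff_distrib)
  also have "(mvar (vS (Suc j)) - mvar (vT (Suc j))) dvd \<dots>"
    by (intro dvd_sum dvd_mult2 dv)
  finally show ?thesis .
qed

definition specv :: "nat \<Rightarrow> (nat \<times> nat list) set \<Rightarrow> nat \<Rightarrow> nat \<Rightarrow> mpoly" where
  "specv d E k j = (\<Sum>e\<in>{e. (Suc k, e) \<in> E}. \<Prod>l<d. (ysl d j ! l) ^ (e ! l))"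

lemma phi_Mdixon:
  assumes d: "1 \<le> d" and ab: "a < n (Suc k)" "b < n (Suc k)"
    and E: "{e. (Suc k, e) \<in> E} \<subseteq> multi_indices d \<tau>"
  shows "phiE E (Mdixon d \<tau> n k j $$ (a, b)) = (if a = b then specv d E k j else 0)"
proof -
  have py: "phiE E (\<Prod>l<d. (ysl d j ! l) ^ (e ! l)) = (\<Prod>l<d. (ysl d j ! l) ^ (e ! l))" for e
    using d by (simp add: phi_hom.hom_prod phi_hom.hom_power phi_ysl)
  have "phiE E (Mdixon d \<tau> n k j $$ (a, b)) =
     (\<Sum>e\<in>multi_indices d \<tau>. (\<Prod>l<d. (ysl d j ! l) ^ (e ! l)) * (if (Suc k, e) \<in> E \<and> a = b then 1 else 0))"
    by (simp add: Mdixon_entry[of a n k b, OF ab] phi_hom.hom_sum phi_hom.hom_mult py phi_vC)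
  also have "\<dots> = (if a = b then (\<Sum>e\<in>multi_indices d \<tau>. if e \<in> {e. (Suc k, e) \<in> E} then (\<Prod>l<d. (ysl d j ! l) ^ (e ! l)) else 0) else 0)"
    by (auto intro: sum.cong)
  also have "\<dots> = (if a = b then specv d E k j else 0)"
  proof -
    have s: "{e \<in> multi_indices d \<tau>. (Suc k, e) \<in> E} = {e. (Suc k, e) \<in> E}" using E by blast
    show ?thesis
      by (simp add: specv_def sum.inter_filter[OF finite_MI, symmetric] s)
  qed
  finally show ?thesis .
qed


lemma kbd3_entry:
  fixes M :: "nat \<Rightarrow> nat \<Rightarrow> 'a::comm_ring_1 mat"
  assumes carr: "\<And>k j. M k j \<in> carrier_mat (m k) (m k)"
    and ij: "i < m 0 * m 1 * m 2" "j < m 0 * m 1 * m 2"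
  defines "P \<equiv> m 1 * m 2"
  defines "S \<equiv> \<lambda>(k::nat) (x::nat). if k = 0 then M 0 x $$ (i div P, j div P)
                  else if k = 1 then M 1 x $$ ((i mod P) div m 2, (j mod P) div m 2)
                  else M 2 x $$ ((i mod P) mod m 2, (j mod P) mod m 2)"
  shows "kron_block_det 3 m M $$ (i, j) =
     S 0 0 * S 1 1 * S 2 2 - S 0 0 * S 1 2 * S 2 1 - S 0 1 * S 1 0 * S 2 2
     + S 0 1 * S 1 2 * S 2 0 + S 0 2 * S 1 0 * S 2 1 - S 0 2 * S 1 1 * S 2 0"
proof -
  have u3: "[0..<3] = [0, 1, 2::nat]" by (simp add: upt_rec)
  have l3: "{..<3::nat} = {0, 1, 2}" by auto
  have pr: "(\<Prod>i<3. m i) = m 0 * m 1 * m 2" by (simp add: l3)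
  have kl: "kron_list [M 0 a, M 1 b, M 2 c] $$ (i, j) = S 0 a * S 1 b * S 2 c" for a b c
  proof -
    have d: "dim_row (M k x) = m k" "dim_col (M k x) = m k" for k x using carr[of k x] by auto
    have dims: "\<forall>A\<in>set [M 0 a, M 1 b, M 2 c]. dim_col A = dim_row A"
      by (simp add: d)
    have "kron_list [M 0 a, M 1 b, M 2 c] $$ (i, j) = kentry [M 0 a, M 1 b, M 2 c] i j"
      using kron_list_props[OF dims] ij d by (auto simp: mult.assoc)
    also have "\<dots> = S 0 a * S 1 b * S 2 c"
      by (simp add: d S_def P_def mult.assoc)
    finally show ?thesis .
  qed
  have "kron_block_det 3 m M $$ (i, j) =
      (\<Sum>\<sigma> | \<sigma> permutes {..<3::nat}. of_int (sign \<sigma>) * kron_list (map (\<lambda>i. M i (\<sigma> i)) [0..<3]) $$ (i, j))"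
    using ij by (simp add: kron_block_det_def pr)
  also have "\<dots> = (\<Sum>\<sigma> | \<sigma> permutes {..<3::nat}. of_int (sign \<sigma>) * (\<lambda>a b c. S 0 a * S 1 b * S 2 c) (\<sigma> 0) (\<sigma> 1) (\<sigma> 2))"
    by (simp only: u3 list.map kl)
  also have "\<dots> = S 0 0 * S 1 1 * S 2 2 - S 0 0 * S 1 2 * S 2 1 - S 0 1 * S 1 0 * S 2 2
     + S 0 1 * S 1 2 * S 2 0 + S 0 2 * S 1 0 * S 2 1 - S 0 2 * S 1 1 * S 2 0"
    by (rule perm_sum_3)
  finally show ?thesis .
qed

lemma digits3:
  fixes i j P q :: nat
  assumes "i div P = j div P" "(i mod P) div q = (j mod P) div q" "(i mod P) mod q = (j mod P) mod q"
  shows "i = j"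
  by (metis assms div_mult_mod_eq)

lemma det3_dvd:
  fixes S :: "nat \<Rightarrow> nat \<Rightarrow> 'a::comm_ring_1"
  assumes "\<And>k. k < 3 \<Longrightarrow> x dvd (S k 0 - S k 1)" "\<And>k. k < 3 \<Longrightarrow> y dvd (S k 1 - S k 2)"
  shows "\<exists>q. S 0 0 * S 1 1 * S 2 2 - S 0 0 * S 1 2 * S 2 1 - S 0 1 * S 1 0 * S 2 2
     + S 0 1 * S 1 2 * S 2 0 + S 0 2 * S 1 0 * S 2 1 - S 0 2 * S 1 1 * S 2 0 = q * (x * y)"
proof -
  obtain g where g: "\<And>k. k < 3 \<Longrightarrow> S k 0 - S k 1 = x * g k"
    using assms(1) unfolding dvd_def by metis
  obtain h where h: "\<And>k. k < 3 \<Longrightarrow> S k 1 - S k 2 = y * h k"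
    using assms(2) unfolding dvd_def by metis
  have s1: "S k 1 = S k 2 + y * h k" if "k < 3" for k using h[OF that] by (simp add: algebra_simps)
  have s0: "S k 0 = S k 2 + y * h k + x * g k" if "k < 3" for k using g[OF that] s1[OF that] by (simp add: algebra_simps)
  have e: "S 0 0 = S 0 2 + y * h 0 + x * g 0" "S 1 0 = S 1 2 + y * h 1 + x * g 1" "S 2 0 = S 2 2 + y * h 2 + x * g 2"
    "S 0 1 = S 0 2 + y * h 0" "S 1 1 = S 1 2 + y * h 1" "S 2 1 = S 2 2 + y * h 2"
    using s0[of 0] s0[of 1] s0[of 2] s1[of 0] s1[of 1] s1[of 2] by simp_all
  let ?c = "\<lambda>k. S k 2"
  show ?thesis
    apply (rule exI[of _ "g 0 * h 1 * ?c 2 - g 0 * ?c 1 * h 2 - h 0 * g 1 * ?c 2 + h 0 * ?c 1 * g 2 + ?c 0 * g 1 * h 2 - ?c 0 * h 1 * g 2"])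
    apply (simp only: e)
    apply (simp add: algebra_simps)
    done
qed


declare One_nat_def[simp del]

lemma lt3_eq: "{..<3::nat} = {0, 1, 2}" by auto

lemma prod_lt3: "(\<Prod>l<3::nat. f l) = f 0 * f 1 * f 2"
  by (simp add: lt3_eq mult.assoc)

lemma mvar_pow: "mvar v ^ k = Poly_Mapping.single (Poly_Mapping.single v k) 1"
proof (induction k)
  case 0 then show ?case by simp
next
  case (Suc k)
  have "mvar v ^ Suc k = mvar v * Poly_Mapping.single (Poly_Mapping.single v k) 1" by (simp only: power_Suc Suc)
  also have "\<dots> = Poly_Mapping.single (Poly_Mapping.single v 1 + Poly_Mapping.single v k) 1"
    by (simp add: mvar_def mult_single)
  also have "Poly_Mapping.single v 1 + Poly_Mapping.single v k = Poly_Mapping.single v (Suc k)"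
  proof -
    have "(1::nat) + k = Suc k" by simp
    then show ?thesis by (simp only: single_add[symmetric])
  qed
  finally show ?case .
qed

abbreviation "S1 \<equiv> mvar (vS 1)"
abbreviation "S2 \<equiv> mvar (vS 2)"
abbreviation "T1 \<equiv> mvar (vT 1)"
abbreviation "T2 \<equiv> mvar (vT 2)"

definition mono4 :: "nat \<Rightarrow> nat \<Rightarrow> nat \<Rightarrow> nat \<Rightarrow> mpoly" where
  "mono4 p q r s = T1 ^ p * S1 ^ q * T2 ^ r * S2 ^ s"

lemma mono4_single: "mono4 p q r s = Poly_Mapping.single
   (Poly_Mapping.single (vT 1) p + Poly_Mapping.single (vS 1) q + Poly_Mapping.single (vT 2) r + Poly_Mapping.single (vS 2) s) 1"
  by (simp add: mono4_def mvar_pow mult_single)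

lemma coeff_mono4:
  "coeff_st 3 (mono4 p q r s) a b = (if q = a 1 \<and> p = b 1 \<and> s = a 2 \<and> r = b 2 then 1 else 0)"
proof -
  let ?m = "Poly_Mapping.single (vT 1) p + Poly_Mapping.single (vS 1) q + Poly_Mapping.single (vT 2) r + Poly_Mapping.single (vS 2) s"
  have st: "st_vars 3 = {vS 1, vS 2, vT 1, vT 2}"
  proof -
    have "{1..<3::nat} = {1, 2}" by auto
    then show ?thesis by (auto simp: st_vars_def)
  qed
  have lk: "Poly_Mapping.lookup ?m (vT 1) = p" "Poly_Mapping.lookup ?m (vS 1) = q"
    "Poly_Mapping.lookup ?m (vT 2) = r" "Poly_Mapping.lookup ?m (vS 2) = s"
    by (simp_all add: lookup_add lookup_single when_def v_ne v_ne[symmetric] v_eq)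
  have lk0: "Poly_Mapping.lookup ?m v = 0" if "v \<notin> st_vars 3" for v
    using that by (auto simp: st lookup_add lookup_single when_def)
  have strip: "strip_st 3 ?m = 0"
    by (rule poly_mapping_eqI) (simp add: lookup_strip_st lk0)
  have c: "condst 3 a b ?m \<longleftrightarrow> q = a 1 \<and> p = b 1 \<and> s = a 2 \<and> r = b 2"
  proof -
    have "{1..<3::nat} = {1, 2}" by auto
    then show ?thesis by (auto simp: condst_def lk)
  qed
  show ?thesis
    unfolding mono4_single coeff_st_single cf_def strip c by simp
qed

definition E3 :: "(nat \<Rightarrow> nat) \<Rightarrow> (nat \<times> nat list) set" where
  "E3 \<tau> = {(1, [\<tau> 1, 0, 0]), (2, [0, \<tau> 2, 0]), (3, [0, 0, 0]), (3, [\<tau> 1, \<tau> 2, 0])}"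

lemma E3_MI: "{e. (Suc k, e) \<in> E3 \<tau>} \<subseteq> multi_indices 3 \<tau>"
proof -
  have l: "k < 3 \<longleftrightarrow> k = 0 \<or> k = 1 \<or> k = (2::nat)" for k by arith
  have lt3: "(\<forall>k<3. P k) \<longleftrightarrow> P 0 \<and> P 1 \<and> P (2::nat)" for P
    by (auto simp: l)
  show ?thesis by (auto simp: E3_def multi_indices_def lt3 One_nat_def[symmetric])
qed

lemma specv3:
  assumes "0 < \<tau> 1"
  shows "specv 3 (E3 \<tau>) 0 j = (ysl 3 j ! 0) ^ \<tau> 1"
    "specv 3 (E3 \<tau>) 1 j = (ysl 3 j ! 1) ^ \<tau> 2"
    "specv 3 (E3 \<tau>) 2 j = 1 + (ysl 3 j ! 0) ^ \<tau> 1 * (ysl 3 j ! 1) ^ \<tau> 2"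
proof -
  have a: "{e. (Suc 0, e) \<in> E3 \<tau>} = {[\<tau> 1, 0, 0]}" by (auto simp: E3_def)
  have b: "{e. (Suc 1, e) \<in> E3 \<tau>} = {[0, \<tau> 2, 0]}" by (auto simp: E3_def)
  have c: "{e. (Suc 2, e) \<in> E3 \<tau>} = {[0, 0, 0], [\<tau> 1, \<tau> 2, 0]}" by (auto simp: E3_def)
  have ne: "[0, 0, 0] \<noteq> [\<tau> 1, \<tau> 2, 0::nat]" using assms by simp
  show "specv 3 (E3 \<tau>) 0 j = (ysl 3 j ! 0) ^ \<tau> 1"
    unfolding specv_def a by (simp add: prod_lt3)
  show "specv 3 (E3 \<tau>) 1 j = (ysl 3 j ! 1) ^ \<tau> 2"
    unfolding specv_def b by (simp add: prod_lt3)
  show "specv 3 (E3 \<tau>) 2 j = 1 + (ysl 3 j ! 0) ^ \<tau> 1 * (ysl 3 j ! 1) ^ \<tau> 2"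
    unfolding specv_def c using ne by (simp add: prod_lt3)
qed

lemma ysl3: "ysl 3 0 ! 0 = S1" "ysl 3 1 ! 0 = T1" "ysl 3 2 ! 0 = T1"
  "ysl 3 0 ! 1 = S2" "ysl 3 1 ! 1 = S2" "ysl 3 2 ! 1 = T2"
  by (simp_all add: ysl_nth One_nat_def[symmetric])


definition G1 :: "nat \<Rightarrow> mpoly" where "G1 t = (\<Sum>i<t. T1 ^ (t - Suc i) * S1 ^ i)"
definition G2 :: "nat \<Rightarrow> mpoly" where "G2 t = (\<Sum>i<t. T2 ^ (t - Suc i) * S2 ^ i)"

definition delta3 :: "(nat \<Rightarrow> nat) \<Rightarrow> mpoly" where
  "delta3 \<tau> = G1 (\<tau> 1) * G2 (\<tau> 2) * (1 - T1 ^ \<tau> 1 * S2 ^ \<tau> 2)"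

lemma det3_spec:
  fixes u u' w w' :: mpoly
  defines "v \<equiv> \<lambda>k j. if k = (0::nat) then (if j = (0::nat) then u else u')
                 else if k = 1 then (if j = 2 then w' else w)
                 else (if j = 0 then 1 + u * w else if j = 1 then 1 + u' * w else 1 + u' * w')"
  shows "v 0 0 * v 1 1 * v 2 2 - v 0 0 * v 1 2 * v 2 1 - v 0 1 * v 1 0 * v 2 2
     + v 0 1 * v 1 2 * v 2 0 + v 0 2 * v 1 0 * v 2 1 - v 0 2 * v 1 1 * v 2 0
     = (u - u') * (w - w') * (1 - u' * w)"
  by (simp add: v_def algebra_simps)

lemma det3_delta:
  "(S1 ^ \<tau> 1 - T1 ^ \<tau> 1) * (S2 ^ \<tau> 2 - T2 ^ \<tau> 2) * (1 - T1 ^ \<tau> 1 * S2 ^ \<tau> 2)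
    = delta3 \<tau> * ((S1 - T1) * (S2 - T2))"
  unfolding delta3_def G1_def G2_def power_diff_sumr2[of S1] power_diff_sumr2[of S2]
  by (simp add: algebra_simps)

lemma sum_delta2:
  fixes c :: "'a::comm_monoid_add" and A B x y :: nat
  shows "(\<Sum>i<A. \<Sum>j<B. if i = x \<and> j = y \<and> P i j then c else 0) = (if x < A \<and> y < B \<and> P x y then c else 0)"
proof -
  have inner: "(if i = x \<and> j = y \<and> P i j then c else 0) = (if j = y then (if i = x then (if P x y then c else 0) else 0) else 0)" for i j
    by auto
  show ?thesis unfolding inner by (cases "y < B") simp_all
qed

lemma coeff_delta3:
  "coeff_st 3 (delta3 \<tau>) a b =
     (if a 1 < \<tau> 1 \<and> a 2 < \<tau> 2 \<and> b 1 = \<tau> 1 - Suc (a 1) \<and> b 2 = \<tau> 2 - Suc (a 2) then 1 else 0)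
   - (if a 1 < \<tau> 1 \<and> a 2 - \<tau> 2 < \<tau> 2 \<and> \<tau> 2 \<le> a 2 \<and> b 1 = \<tau> 1 - Suc (a 1) + \<tau> 1
        \<and> b 2 = \<tau> 2 - Suc (a 2 - \<tau> 2) then 1 else 0)"
proof -
  let ?t1 = "\<tau> 1" and ?t2 = "\<tau> 2"
  have GG: "G1 ?t1 * G2 ?t2 = (\<Sum>i<?t1. \<Sum>j<?t2. mono4 (?t1 - Suc i) i (?t2 - Suc j) j)"
    unfolding G1_def G2_def sum_product mono4_def by (simp add: algebra_simps)
  have GGx: "G1 ?t1 * G2 ?t2 * (T1 ^ ?t1 * S2 ^ ?t2) =
      (\<Sum>i<?t1. \<Sum>j<?t2. mono4 (?t1 - Suc i + ?t1) i (?t2 - Suc j) (j + ?t2))"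
  proof -
    have m: "mono4 p q r s * (T1 ^ ?t1 * S2 ^ ?t2) = mono4 (p + ?t1) q r (s + ?t2)" for p q r s
      by (simp add: mono4_def power_add mult_ac)
    show ?thesis unfolding GG sum_distrib_right m ..
  qed
  have d: "delta3 \<tau> = G1 ?t1 * G2 ?t2 - G1 ?t1 * G2 ?t2 * (T1 ^ ?t1 * S2 ^ ?t2)"
    by (simp add: delta3_def algebra_simps)
  have c1: "coeff_st 3 (G1 ?t1 * G2 ?t2) a b =
     (if a 1 < ?t1 \<and> a 2 < ?t2 \<and> b 1 = ?t1 - Suc (a 1) \<and> b 2 = ?t2 - Suc (a 2) then 1 else 0)"
  proof -
    have "coeff_st 3 (G1 ?t1 * G2 ?t2) a b =
       (\<Sum>i<?t1. \<Sum>j<?t2. if i = a 1 \<and> j = a 2 \<and> (b 1 = ?t1 - Suc i \<and> b 2 = ?t2 - Suc j) then 1 else 0)"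
      unfolding GG coeff_st_sum coeff_mono4 by (intro sum.cong refl) auto
    also have "\<dots> = (if a 1 < ?t1 \<and> a 2 < ?t2 \<and> (b 1 = ?t1 - Suc (a 1) \<and> b 2 = ?t2 - Suc (a 2)) then 1 else 0)"
      by (rule sum_delta2)
    finally show ?thesis by simp
  qed
  have c2: "coeff_st 3 (G1 ?t1 * G2 ?t2 * (T1 ^ ?t1 * S2 ^ ?t2)) a b =
     (if a 1 < ?t1 \<and> a 2 - ?t2 < ?t2 \<and> ?t2 \<le> a 2 \<and> b 1 = ?t1 - Suc (a 1) + ?t1
        \<and> b 2 = ?t2 - Suc (a 2 - ?t2) then 1 else 0)"
  proof -
    have "coeff_st 3 (G1 ?t1 * G2 ?t2 * (T1 ^ ?t1 * S2 ^ ?t2)) a b =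
       (\<Sum>i<?t1. \<Sum>j<?t2. if i = a 1 \<and> j = a 2 - ?t2 \<and> (?t2 \<le> a 2 \<and> b 1 = ?t1 - Suc i + ?t1 \<and> b 2 = ?t2 - Suc j) then 1 else 0)"
      unfolding GGx coeff_st_sum coeff_mono4 by (intro sum.cong refl) auto
    also have "\<dots> = (if a 1 < ?t1 \<and> a 2 - ?t2 < ?t2 \<and> (?t2 \<le> a 2 \<and> b 1 = ?t1 - Suc (a 1) + ?t1 \<and> b 2 = ?t2 - Suc (a 2 - ?t2)) then 1 else 0)"
      by (rule sum_delta2)
    finally show ?thesis by (simp add: conj_ac)
  qed
  show ?thesis unfolding d coeff_st_diff c1 c2 ..
qed


lemma mr_eq:
  fixes x1 y1 t x2 y2 :: nat
  assumes "x1 < t" "y1 < t"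
  shows "x1 + t * x2 = y1 + t * y2 \<longleftrightarrow> x1 = y1 \<and> x2 = y2"
proof
  assume h: "x1 + t * x2 = y1 + t * y2"
  have t0: "0 < t" using assms by simp
  have "(x1 + t * x2) mod t = x1" "(y1 + t * y2) mod t = y1" using assms by simp_all
  moreover have "(x1 + t * x2) div t = x2" "(y1 + t * y2) div t = y2" using assms t0 by simp_all
  ultimately show "x1 = y1 \<and> x2 = y2" using h by metis
qed simp

lemma mr_bound:
  fixes x1 t x2 M :: nat
  assumes "x1 < t" "x2 < M"
  shows "x1 + t * x2 < t * M"
proof -
  have "x1 + t * x2 < t + t * x2" using assms by simp
  also have "t + t * x2 = t * Suc x2" by simp
  also have "\<dots> \<le> t * M" using assms by (intro mult_le_mono2) simp
  finally show ?thesis .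
qed

lemma aux_lt1: "\<not> b < (t::nat) \<Longrightarrow> b < 2 * t \<Longrightarrow> 2 * t - Suc b < t" by arith
lemma aux_lt2: "b < (t::nat) \<Longrightarrow> t - Suc b < t" by arith
lemma aux_lt3: "b < (t::nat) \<Longrightarrow> 2 * t - Suc b < 2 * t" by arith
lemma aux_lt4: "b < (t::nat) \<Longrightarrow> t - Suc b < 2 * t" by arith

definition sig3 :: "nat \<Rightarrow> nat \<Rightarrow> nat \<Rightarrow> nat" where
  "sig3 t1 t2 rb = (let b1 = rb mod (2 * t1); b2 = (rb div (2 * t1)) mod t2 in
     if b1 < t1 then (t1 - Suc b1) + t1 * (t2 - Suc b2) else (2 * t1 - Suc b1) + t1 * (2 * t2 - Suc b2))"

lemma arith3:
  fixes t1 t2 cb rb :: nat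
  assumes t: "0 < t1" "0 < t2" and cb: "cb < t1 * (2 * t2)" and rb: "rb < t1 * (2 * t2)"
  defines "a1 \<equiv> cb mod t1" and "a2 \<equiv> (cb div t1) mod (2 * t2)"
    and "b1 \<equiv> rb mod (2 * t1)" and "b2 \<equiv> (rb div (2 * t1)) mod t2"
  shows "(a1 < t1 \<and> a2 < t2 \<and> b1 = t1 - Suc a1 \<and> b2 = t2 - Suc a2) \<longleftrightarrow> cb = sig3 t1 t2 rb \<and> b1 < t1"
    and "(a1 < t1 \<and> a2 - t2 < t2 \<and> t2 \<le> a2 \<and> b1 = t1 - Suc a1 + t1 \<and> b2 = t2 - Suc (a2 - t2))
          \<longleftrightarrow> cb = sig3 t1 t2 rb \<and> \<not> b1 < t1"
proof -
  have "cb div t1 < 2 * t2" using cb by (simp add: less_mult_imp_div_less mult.commute)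
  then have a2e: "a2 = cb div t1" by (simp add: a2_def)
  have cbe: "cb = a1 + t1 * a2" by (simp add: a1_def a2e)
  have a1l: "a1 < t1" using t by (simp add: a1_def)
  have b1l: "b1 < 2 * t1" using t by (simp add: b1_def)
  have b2l: "b2 < t2" using t by (simp add: b2_def)
  define x1 where "x1 = (if b1 < t1 then t1 - Suc b1 else 2 * t1 - Suc b1)"
  define x2 where "x2 = (if b1 < t1 then t2 - Suc b2 else 2 * t2 - Suc b2)"
  have sig: "sig3 t1 t2 rb = x1 + t1 * x2"
    by (simp add: sig3_def Let_def x1_def x2_def b1_def b2_def)
  have x1l: "x1 < t1"
    unfolding x1_def using b1l aux_lt1 aux_lt2 by auto
  have eq: "cb = sig3 t1 t2 rb \<longleftrightarrow> a1 = x1 \<and> a2 = x2"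
    unfolding sig cbe by (rule mr_eq[OF a1l x1l])
  show "(a1 < t1 \<and> a2 < t2 \<and> b1 = t1 - Suc a1 \<and> b2 = t2 - Suc a2) \<longleftrightarrow> cb = sig3 t1 t2 rb \<and> b1 < t1"
    unfolding eq x1_def x2_def using a1l b1l b2l by auto
  show "(a1 < t1 \<and> a2 - t2 < t2 \<and> t2 \<le> a2 \<and> b1 = t1 - Suc a1 + t1 \<and> b2 = t2 - Suc (a2 - t2))
          \<longleftrightarrow> cb = sig3 t1 t2 rb \<and> \<not> b1 < t1"
    unfolding eq x1_def x2_def using a1l b1l b2l by auto
qed

lemma sig3_bound:
  fixes t1 t2 rb :: nat
  assumes t: "0 < t1" "0 < t2"
  shows "sig3 t1 t2 rb < t1 * (2 * t2)"
proof -
  let ?b1 = "rb mod (2 * t1)" and ?b2 = "(rb div (2 * t1)) mod t2"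
  have b1l: "?b1 < 2 * t1" using t by simp
  have b2l: "?b2 < t2" using t by simp
  show ?thesis
  proof (cases "?b1 < t1")
    case True
    have "t1 - Suc ?b1 + t1 * (t2 - Suc ?b2) < t1 * (2 * t2)"
      by (rule mr_bound) (use True t b2l aux_lt2 aux_lt4 in auto)
    then show ?thesis unfolding sig3_def Let_def using True by simp
  next
    case False
    have "2 * t1 - Suc ?b1 + t1 * (2 * t2 - Suc ?b2) < t1 * (2 * t2)"
      by (rule mr_bound) (use False t b1l b2l aux_lt1 aux_lt3 in auto)
    then show ?thesis unfolding sig3_def Let_def using False by simp
  qed
qed

lemma sig3_inj:
  fixes t1 t2 :: nat
  assumes t: "0 < t1" "0 < t2"
  shows "inj_on (sig3 t1 t2) {..<t1 * (2 * t2)}"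
proof (rule inj_onI)
  fix r r' assume r: "r \<in> {..<t1 * (2 * t2)}" and r': "r' \<in> {..<t1 * (2 * t2)}"
    and e: "sig3 t1 t2 r = sig3 t1 t2 r'"
  define b1 where "b1 = r mod (2 * t1)"
  define b2 where "b2 = (r div (2 * t1)) mod t2"
  define b1' where "b1' = r' mod (2 * t1)"
  define b2' where "b2' = (r' div (2 * t1)) mod t2"
  have "r div (2 * t1) < t2" using r by (simp add: less_mult_imp_div_less mult.commute mult.left_commute)
  then have re: "r = b1 + 2 * t1 * b2" by (simp add: b1_def b2_def)
  have "r' div (2 * t1) < t2" using r' by (simp add: less_mult_imp_div_less mult.commute mult.left_commute)
  then have re': "r' = b1' + 2 * t1 * b2'" by (simp add: b1'_def b2'_def)
  have l: "b1 < 2 * t1" "b2 < t2" "b1' < 2 * t1" "b2' < t2" using t by (simp_all add: b1_def b2_def b1'_def b2'_def)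
  define x1 where "x1 = (if b1 < t1 then t1 - Suc b1 else 2 * t1 - Suc b1)"
  define x2 where "x2 = (if b1 < t1 then t2 - Suc b2 else 2 * t2 - Suc b2)"
  define x1' where "x1' = (if b1' < t1 then t1 - Suc b1' else 2 * t1 - Suc b1')"
  define x2' where "x2' = (if b1' < t1 then t2 - Suc b2' else 2 * t2 - Suc b2')"
  have s: "sig3 t1 t2 r = x1 + t1 * x2" "sig3 t1 t2 r' = x1' + t1 * x2'"
    by (simp_all add: sig3_def Let_def x1_def x2_def b1_def b2_def x1'_def x2'_def b1'_def b2'_def)
  have "x1 < t1" "x1' < t1" unfolding x1_def x1'_def using l aux_lt1 aux_lt2 by auto
  then have "x1 = x1' \<and> x2 = x2'" using e s mr_eq by metis
  then have "b1 = b1' \<and> b2 = b2'" using l unfolding x1_def x2_def x1'_def x2'_def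
    by (auto split: if_splits)
  then show "r = r'" using re re' by simp
qed


definition det3 :: "(nat \<Rightarrow> nat \<Rightarrow> 'a::comm_ring_1) \<Rightarrow> 'a" where
  "det3 S = S 0 0 * S 1 1 * S 2 2 - S 0 0 * S 1 2 * S 2 1 - S 0 1 * S 1 0 * S 2 2
     + S 0 1 * S 1 2 * S 2 0 + S 0 2 * S 1 0 * S 2 1 - S 0 2 * S 1 1 * S 2 0"

lemma phi_det3: "phi Zs Os (det3 S) = det3 (\<lambda>k x. phi Zs Os (S k x))"
  by (simp add: det3_def phi_hom.hom_add phi_hom.hom_minus phi_hom.hom_mult)

lemma det3_scale: "det3 (\<lambda>k x. c k * v k x) = c 0 * c 1 * c 2 * det3 v"
  by (simp add: det3_def algebra_simps)

lemma mvar_diff_nz: "v \<noteq> w \<Longrightarrow> mvar v - mvar w \<noteq> 0"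
proof
  assume vw: "v \<noteq> w" and h: "mvar v - mvar w = 0"
  have "Poly_Mapping.lookup (mvar v - mvar w) (Poly_Mapping.single v 1) = 1"
  proof -
    have "Poly_Mapping.single w (1::nat) \<noteq> Poly_Mapping.single v 1"
      using vw by (metis lookup_single_eq lookup_single_not_eq zero_neq_one)
    then show ?thesis using vw by (simp add: mvar_def lookup_minus lookup_single when_def)
  qed
  then show False using h by simp
qed

theorem case3:
  fixes \<tau> n :: "nat \<Rightarrow> nat"
  assumes tpos: "\<forall>k\<in>{1..3}. 0 < \<tau> k" and npos: "\<forall>k\<in>{1..3}. 0 < n k"
  shows "det (dixon_resultant 3 \<tau> n) \<noteq> 0"
proof -
  have t1: "0 < \<tau> 1" and t2: "0 < \<tau> 2" using tpos by auto
  have n1: "0 < n 1" and n2: "0 < n 2" and n3: "0 < n 3" using npos by auto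
  let ?E = "E3 \<tau>"
  let ?B = "kron_block_det 3 (\<lambda>i. n (Suc i)) (Mdixon 3 \<tau> n)"
  let ?D = "\<Prod>k\<in>{1..<3}. mvar (vS k) - mvar (vT k)"
  have e12: "{1..<3::nat} = {1, 2}" by auto
  have D: "?D = (S1 - T1) * (S2 - T2)" by (simp add: e12)
  have N: "Nsize 3 n = n 1 * n 2 * n 3"
  proof -
    have "{1..3::nat} = {1, 2, 3}" by auto
    then show ?thesis by (simp add: Nsize_def mult.assoc)
  qed
  have K: "nblocks 3 \<tau> = \<tau> 1 * (2 * \<tau> 2)" by (simp add: nblocks_def e12)
  define P where "P = n 2 * n 3"
  define dg where "dg k i = (if k = (0::nat) then i div P else if k = 1 then (i mod P) div n 3 else (i mod P) mod n 3)" for k i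
  define Sf where "Sf i j k x = Mdixon 3 \<tau> n k x $$ (dg k i, dg k j)" for i j k x
  have dgl: "dg k i < n (Suc k)" if "i < n 1 * n 2 * n 3" "k < 3" for k i
  proof -
    have P0: "0 < P" using n2 n3 by (simp add: P_def)
    have "i div P < n 1" using that(1) by (simp add: P_def less_mult_imp_div_less mult.assoc)
    moreover have "(i mod P) div n 3 < n 2" using P0 by (simp add: P_def less_mult_imp_div_less)
    moreover have "(i mod P) mod n 3 < n 3" using n3 by simp
    moreover have "k = 0 \<or> k = 1 \<or> k = 2" using that(2) by arith
    ultimately show ?thesis by (auto simp: dg_def numeral_2_eq_2 numeral_3_eq_3 One_nat_def)
  qed
  have Bdet: "?B $$ (i, j) = det3 (Sf i j)" if "i < n 1 * n 2 * n 3" "j < n 1 * n 2 * n 3" for i j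
  proof -
    have "?B $$ (i, j) = det3 (\<lambda>k x. if k = 0 then Mdixon 3 \<tau> n 0 x $$ (i div (n (Suc 1) * n (Suc 2)), j div (n (Suc 1) * n (Suc 2)))
                  else if k = 1 then Mdixon 3 \<tau> n 1 x $$ ((i mod (n (Suc 1) * n (Suc 2))) div n (Suc 2), (j mod (n (Suc 1) * n (Suc 2))) div n (Suc 2))
                  else Mdixon 3 \<tau> n 2 x $$ ((i mod (n (Suc 1) * n (Suc 2))) mod n (Suc 2), (j mod (n (Suc 1) * n (Suc 2))) mod n (Suc 2)))"
      unfolding det3_def
      by (rule kbd3_entry[where m = "\<lambda>i. n (Suc i)" and M = "Mdixon 3 \<tau> n"]) (use that in \<open>simp_all add: Mdixon_carrier One_nat_def[symmetric]\<close>)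
    also have "\<dots> = det3 (Sf i j)"
      unfolding det3_def Sf_def dg_def P_def by simp
    finally show ?thesis .
  qed
  have dgs: "dg k i < n (Suc k)" "dg k j < n (Suc k)" if "i < Nsize 3 n" "j < Nsize 3 n" "k < 3" for i j k
    using dgl that N by auto
  have k3: "k < 3 \<longleftrightarrow> k = 0 \<or> k = 1 \<or> k = (2::nat)" for k by arith
  define v where "v k x = specv 3 ?E k x" for k x
  have detv: "det3 v = delta3 \<tau> * ((S1 - T1) * (S2 - T2))"
  proof -
    have "det3 v = (S1 ^ \<tau> 1 - T1 ^ \<tau> 1) * (S2 ^ \<tau> 2 - T2 ^ \<tau> 2) * (1 - T1 ^ \<tau> 1 * S2 ^ \<tau> 2)"
      by (simp add: det3_def v_def specv3[of \<tau>, OF t1] ysl3 algebra_simps)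
    then show ?thesis by (simp add: det3_delta)
  qed
  show ?thesis
  proof (rule reduction[where Zs = "Zsf ?E" and Os = "Osf ?E" and \<delta> = "delta3 \<tau>"
        and \<sigma> = "sig3 (\<tau> 1) (\<tau> 2)" and \<epsilon> = "\<lambda>rb. if rb mod (2 * \<tau> 1) < \<tau> 1 then 1 else -1"])
    fix i j assume i: "i < Nsize 3 n" and j: "j < Nsize 3 n"
    have ij: "i < n 1 * n 2 * n 3" "j < n 1 * n 2 * n 3" using i j N by auto
    have dv1: "(S1 - T1) dvd (Sf i j k 0 - Sf i j k 1)" if "k < 3" for k
      using Mdixon_dvd[where d = 3 and j = 0 and a = "dg k i" and b = "dg k j" and n = n and k = k and \<tau> = \<tau>]
        dgs[OF i j that] by (simp add: Sf_def One_nat_def[symmetric])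
    have dv2: "(S2 - T2) dvd (Sf i j k 1 - Sf i j k 2)" if "k < 3" for k
      using Mdixon_dvd[where d = 3 and j = 1 and a = "dg k i" and b = "dg k j" and n = n and k = k and \<tau> = \<tau>]
        dgs[OF i j that] by (simp add: Sf_def)
    obtain q where "det3 (Sf i j) = q * ((S1 - T1) * (S2 - T2))"
      using det3_dvd[of "S1 - T1" "Sf i j" "S2 - T2", OF dv1 dv2] unfolding det3_def by blast
    then show "\<exists>q. ?B $$ (i, j) = q * ?D" unfolding Bdet[OF ij] D by blast
  next
    fix i j assume i: "i < Nsize 3 n" and j: "j < Nsize 3 n"
    have ij: "i < n 1 * n 2 * n 3" "j < n 1 * n 2 * n 3" using i j N by auto
    define c where "c k = (if dg k i = dg k j then 1 else 0 :: mpoly)" for k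
    have ph: "phiE ?E (Sf i j k x) = c k * v k x" if "k < 3" for k x
      unfolding Sf_def c_def v_def
      using phi_Mdixon[where d = 3 and a = "dg k i" and b = "dg k j" and n = n and k = k and E = ?E and \<tau> = \<tau> and j = x,
          OF _ dgs(1)[OF i j that] dgs(2)[OF i j that] E3_MI] by simp
    have "phiE ?E (det3 (Sf i j)) = det3 (\<lambda>k x. c k * v k x)"
      by (simp only: phi_det3) (simp add: det3_def ph)
    also have "\<dots> = c 0 * c 1 * c 2 * det3 v" by (rule det3_scale)
    also have "c 0 * c 1 * c 2 = (if i = j then 1 else 0)"
    proof (cases "i = j")
      case True then show ?thesis by (simp add: c_def)
    next
      case False
      then have "\<not> (dg 0 i = dg 0 j \<and> dg 1 i = dg 1 j \<and> dg 2 i = dg 2 j)"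
        using digits3[of i P j "n 3"] by (auto simp: dg_def)
      then show ?thesis using False by (auto simp: c_def)
    qed
    finally show "phiE ?E (?B $$ (i, j)) = (if i = j then delta3 \<tau> else 0) * ?D"
      unfolding Bdet[OF ij] D detv by simp
  next
    show "phiE ?E ?D = ?D"
      unfolding D by (simp add: phi_hom.hom_mult phi_hom.hom_minus phi_vS phi_vT)
    show "?D \<noteq> 0" unfolding D using mvar_diff_nz[OF v_ne(1)[of 1 1]] mvar_diff_nz[OF v_ne(1)[of 2 2]] by simp
    show "Zsf ?E \<inter> st_vars 3 = {}" "Osf ?E \<inter> st_vars 3 = {}" by (rule ZO_st)+
  next
    fix cb rb assume cb: "cb < nblocks 3 \<tau>" and rb: "rb < nblocks 3 \<tau>"
    have cb': "cb < \<tau> 1 * (2 * \<tau> 2)" and rb': "rb < \<tau> 1 * (2 * \<tau> 2)" using cb rb K by auto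
    have e1: "{1..<1::nat} = {}" "{1..<2::nat} = {1}" by auto
    have se: "s_exp 3 \<tau> cb 1 = cb mod \<tau> 1" "s_exp 3 \<tau> cb 2 = (cb div \<tau> 1) mod (2 * \<tau> 2)"
      by (simp_all add: s_exp_def e1)
    have te: "t_exp 3 \<tau> rb 1 = rb mod (2 * \<tau> 1)" "t_exp 3 \<tau> rb 2 = (rb div (2 * \<tau> 1)) mod \<tau> 2"
      by (simp_all add: t_exp_def e1)
    show "coeff_st 3 (delta3 \<tau>) (s_exp 3 \<tau> cb) (t_exp 3 \<tau> rb) =
        (if cb = sig3 (\<tau> 1) (\<tau> 2) rb then (if rb mod (2 * \<tau> 1) < \<tau> 1 then 1 else -1) else 0)"
      unfolding coeff_delta3 se te arith3[OF t1 t2 cb' rb'] by auto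
  next
    fix rb assume rb: "rb < nblocks 3 \<tau>"
    show "sig3 (\<tau> 1) (\<tau> 2) rb < nblocks 3 \<tau>" unfolding K by (rule sig3_bound[OF t1 t2])
    show "(if rb mod (2 * \<tau> 1) < \<tau> 1 then 1 else -1) * (if rb mod (2 * \<tau> 1) < \<tau> 1 then 1 else -1) = (1::mpoly)"
      by simp
  next
    show "inj_on (sig3 (\<tau> 1) (\<tau> 2)) {..<nblocks 3 \<tau>}" unfolding K by (rule sig3_inj[OF t1 t2])
  qed
qed


lemma kbd2_entry:
  fixes M :: "nat \<Rightarrow> nat \<Rightarrow> 'a::comm_ring_1 mat"
  assumes carr: "\<And>k j. M k j \<in> carrier_mat (m k) (m k)"
    and ij: "i < m 0 * m 1" "j < m 0 * m 1"
  defines "S \<equiv> \<lambda>(k::nat) (x::nat). if k = 0 then M 0 x $$ (i div m 1, j div m 1)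
                  else M 1 x $$ (i mod m 1, j mod m 1)"
  shows "kron_block_det 2 m M $$ (i, j) = S 0 0 * S 1 1 - S 0 1 * S 1 0"
proof -
  have u2: "[0..<2] = [0, 1::nat]" by (simp add: upt_rec)
  have l2: "{..<2::nat} = {0, 1}" by auto
  have pr: "(\<Prod>i<2. m i) = m 0 * m 1" by (simp add: l2)
  have kl: "kron_list [M 0 a, M 1 b] $$ (i, j) = S 0 a * S 1 b" for a b
  proof -
    have d: "dim_row (M k x) = m k" "dim_col (M k x) = m k" for k x using carr[of k x] by auto
    have dims: "\<forall>A\<in>set [M 0 a, M 1 b]. dim_col A = dim_row A"
      by (simp add: d)
    have "kron_list [M 0 a, M 1 b] $$ (i, j) = kentry [M 0 a, M 1 b] i j"
      using kron_list_props[OF dims] ij d by auto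
    also have "\<dots> = S 0 a * S 1 b"
      by (simp add: d S_def)
    finally show ?thesis .
  qed
  have "kron_block_det 2 m M $$ (i, j) =
      (\<Sum>\<sigma> | \<sigma> permutes {..<2::nat}. of_int (sign \<sigma>) * kron_list (map (\<lambda>i. M i (\<sigma> i)) [0..<2]) $$ (i, j))"
    using ij by (simp add: kron_block_det_def pr)
  also have "\<dots> = (\<Sum>\<sigma> | \<sigma> permutes {..<2::nat}. of_int (sign \<sigma>) * (\<lambda>a b. S 0 a * S 1 b) (\<sigma> 0) (\<sigma> 1))"
    by (simp only: u2 list.map kl)
  also have "\<dots> = S 0 0 * S 1 1 - S 0 1 * S 1 0"
    by (rule perm_sum_2)
  finally show ?thesis .
qed

definition mono2 :: "nat \<Rightarrow> nat \<Rightarrow> mpoly" where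
  "mono2 p q = T1 ^ p * S1 ^ q"

lemma coeff_mono2:
  "coeff_st 2 (mono2 p q) a b = (if q = a 1 \<and> p = b 1 then 1 else 0)"
proof -
  let ?m = "Poly_Mapping.single (vT 1) p + Poly_Mapping.single (vS 1) q"
  have ms: "mono2 p q = Poly_Mapping.single ?m 1"
    by (simp add: mono2_def mvar_pow mult_single)
  have e1: "{1..<2::nat} = {1}" by auto
  have st: "st_vars 2 = {vS 1, vT 1}" by (auto simp: st_vars_def e1)
  have lk: "Poly_Mapping.lookup ?m (vT 1) = p" "Poly_Mapping.lookup ?m (vS 1) = q"
    by (simp_all add: lookup_add lookup_single when_def v_ne v_ne[symmetric] v_eq)
  have lk0: "Poly_Mapping.lookup ?m v = 0" if "v \<notin> st_vars 2" for v
    using that by (auto simp: st lookup_add lookup_single when_def)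
  have strip: "strip_st 2 ?m = 0"
    by (rule poly_mapping_eqI) (simp add: lookup_strip_st lk0)
  have c: "condst 2 a b ?m \<longleftrightarrow> q = a 1 \<and> p = b 1"
    by (auto simp: condst_def lk e1)
  show ?thesis
    unfolding ms coeff_st_single cf_def strip c by simp
qed

lemma coeff_G1:
  "coeff_st 2 (G1 t) a b = (if a 1 < t \<and> b 1 = t - Suc (a 1) then 1 else 0)"
proof -
  have "G1 t = (\<Sum>i<t. mono2 (t - Suc i) i)" by (simp add: G1_def mono2_def)
  then have "coeff_st 2 (G1 t) a b = (\<Sum>i<t. coeff_st 2 (mono2 (t - Suc i) i) a b)"
    by (simp add: coeff_st_sum)
  also have "\<dots> = (\<Sum>i<t. if i = a 1 then (if b 1 = t - Suc (a 1) then 1 else 0) else 0)"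
    by (rule sum.cong) (auto simp: coeff_mono2)
  also have "\<dots> = (if a 1 < t \<and> b 1 = t - Suc (a 1) then 1 else 0)"
    by (simp add: sum.delta)
  finally show ?thesis .
qed

definition E2 :: "(nat \<Rightarrow> nat) \<Rightarrow> (nat \<times> nat list) set" where
  "E2 \<tau> = {(1, [\<tau> 1, 0]), (2, [0, 0])}"

lemma E2_MI: "{e. (Suc k, e) \<in> E2 \<tau>} \<subseteq> multi_indices 2 \<tau>"
proof -
  have l: "k < 2 \<longleftrightarrow> k = 0 \<or> k = (1::nat)" for k by arith
  have lt2: "(\<forall>k<2. P k) \<longleftrightarrow> P 0 \<and> P (1::nat)" for P
    by (auto simp: l)
  show ?thesis by (auto simp: E2_def multi_indices_def lt2 One_nat_def[symmetric])
qed

lemma prod_lt2: "(\<Prod>l<2::nat. f l) = f 0 * f 1"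
proof -
  have "{..<2::nat} = {0, 1}" by auto
  then show ?thesis by simp
qed

lemma specv2:
  "specv 2 (E2 \<tau>) 0 j = (ysl 2 j ! 0) ^ \<tau> 1"
  "specv 2 (E2 \<tau>) 1 j = 1"
proof -
  have a: "{e. (Suc 0, e) \<in> E2 \<tau>} = {[\<tau> 1, 0]}" by (auto simp: E2_def)
  have b: "{e. (Suc 1, e) \<in> E2 \<tau>} = {[0, 0]}" by (auto simp: E2_def)
  show "specv 2 (E2 \<tau>) 0 j = (ysl 2 j ! 0) ^ \<tau> 1"
    unfolding specv_def a by (simp add: prod_lt2)
  show "specv 2 (E2 \<tau>) 1 j = 1"
    unfolding specv_def b by (simp add: prod_lt2)
qed

lemma ysl2: "ysl 2 0 ! 0 = S1" "ysl 2 1 ! 0 = T1"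
  by (simp_all add: ysl_nth One_nat_def[symmetric])

theorem case2:
  fixes \<tau> n :: "nat \<Rightarrow> nat"
  assumes tpos: "\<forall>k\<in>{1..2}. 0 < \<tau> k" and npos: "\<forall>k\<in>{1..2}. 0 < n k"
  shows "det (dixon_resultant 2 \<tau> n) \<noteq> 0"
proof -
  have t1: "0 < \<tau> 1" using tpos by auto
  have n1: "0 < n 1" and n2: "0 < n 2" using npos by auto
  let ?E = "E2 \<tau>"
  let ?B = "kron_block_det 2 (\<lambda>i. n (Suc i)) (Mdixon 2 \<tau> n)"
  let ?D = "\<Prod>k\<in>{1..<2}. mvar (vS k) - mvar (vT k)"
  have e1: "{1..<2::nat} = {1}" by auto
  have D: "?D = S1 - T1" by (simp add: e1)
  have N: "Nsize 2 n = n 1 * n 2"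
  proof -
    have "{1..2::nat} = {1, 2}" by auto
    then show ?thesis by (simp add: Nsize_def)
  qed
  have K: "nblocks 2 \<tau> = \<tau> 1" by (simp add: nblocks_def e1)
  define dg where "dg k i = (if k = (0::nat) then i div n 2 else i mod n 2)" for k i
  define Sf where "Sf i j k x = Mdixon 2 \<tau> n k x $$ (dg k i, dg k j)" for i j k x
  have dgl: "dg k i < n (Suc k)" if "i < n 1 * n 2" "k < 2" for k i
  proof -
    have "i div n 2 < n 1" using that(1) by (simp add: less_mult_imp_div_less)
    moreover have "i mod n 2 < n 2" using n2 by simp
    moreover have "k = 0 \<or> k = 1" using that(2) by arith
    ultimately show ?thesis by (auto simp: dg_def numeral_2_eq_2 One_nat_def)
  qed
  have Bdet: "?B $$ (i, j) = Sf i j 0 0 * Sf i j 1 1 - Sf i j 0 1 * Sf i j 1 0"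
    if "i < n 1 * n 2" "j < n 1 * n 2" for i j
  proof -
    show ?thesis
      using kbd2_entry[where m = "\<lambda>i. n (Suc i)" and M = "Mdixon 2 \<tau> n", of i j] that
      by (simp add: Sf_def dg_def Mdixon_carrier One_nat_def[symmetric])
  qed
  have dgs: "dg k i < n (Suc k)" "dg k j < n (Suc k)" if "i < Nsize 2 n" "j < Nsize 2 n" "k < 2" for i j k
    using dgl that N by auto
  define v where "v k x = specv 2 ?E k x" for k x
  have detv: "v 0 0 * v 1 1 - v 0 1 * v 1 0 = G1 (\<tau> 1) * (S1 - T1)"
    by (simp add: v_def specv2 ysl2 G1_def power_diff_sumr2[of S1] mult.commute)
  show ?thesis
  proof (rule reduction[where Zs = "Zsf ?E" and Os = "Osf ?E" and \<delta> = "G1 (\<tau> 1)"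
        and \<sigma> = "\<lambda>rb. \<tau> 1 - Suc rb" and \<epsilon> = "\<lambda>rb. 1"])
    fix i j assume i: "i < Nsize 2 n" and j: "j < Nsize 2 n"
    have ij: "i < n 1 * n 2" "j < n 1 * n 2" using i j N by auto
    have dv1: "(S1 - T1) dvd (Sf i j k 0 - Sf i j k 1)" if "k < 2" for k
      using Mdixon_dvd[where d = 2 and j = 0 and a = "dg k i" and b = "dg k j" and n = n and k = k and \<tau> = \<tau>]
        dgs[OF i j that] by (simp add: Sf_def One_nat_def[symmetric])
    obtain g0 where g0: "Sf i j 0 0 - Sf i j 0 1 = (S1 - T1) * g0" using dv1[of 0] by (auto elim: dvdE)
    obtain g1 where g1: "Sf i j 1 0 - Sf i j 1 1 = (S1 - T1) * g1" using dv1[of 1] by (auto elim: dvdE)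
    have "Sf i j 0 0 * Sf i j 1 1 - Sf i j 0 1 * Sf i j 1 0 =
        (g0 * Sf i j 1 1 - Sf i j 0 1 * g1) * (S1 - T1)"
    proof -
      have e: "Sf i j 0 0 = Sf i j 0 1 + (S1 - T1) * g0" "Sf i j 1 0 = Sf i j 1 1 + (S1 - T1) * g1"
        using g0 g1 by (simp_all add: algebra_simps)
      show ?thesis unfolding e by (simp add: algebra_simps)
    qed
    then show "\<exists>q. ?B $$ (i, j) = q * ?D" unfolding Bdet[OF ij] D by blast
  next
    fix i j assume i: "i < Nsize 2 n" and j: "j < Nsize 2 n"
    have ij: "i < n 1 * n 2" "j < n 1 * n 2" using i j N by auto
    define c where "c k = (if dg k i = dg k j then 1 else 0 :: mpoly)" for k
    have ph: "phiE ?E (Sf i j k x) = c k * v k x" if "k < 2" for k x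
      unfolding Sf_def c_def v_def
      using phi_Mdixon[where d = 2 and a = "dg k i" and b = "dg k j" and n = n and k = k and E = ?E and \<tau> = \<tau> and j = x,
          OF _ dgs(1)[OF i j that] dgs(2)[OF i j that] E2_MI] by simp
    have "phiE ?E (?B $$ (i, j)) = c 0 * c 1 * (v 0 0 * v 1 1 - v 0 1 * v 1 0)"
      unfolding Bdet[OF ij] by (simp add: phi_hom.hom_minus phi_hom.hom_mult ph algebra_simps)
    also have "c 0 * c 1 = (if i = j then 1 else 0)"
    proof (cases "i = j")
      case True then show ?thesis by (simp add: c_def)
    next
      case False
      then have "\<not> (dg 0 i = dg 0 j \<and> dg 1 i = dg 1 j)"
        by (auto simp: dg_def) (metis div_mult_mod_eq)
      then show ?thesis using False by (auto simp: c_def)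
    qed
    finally show "phiE ?E (?B $$ (i, j)) = (if i = j then G1 (\<tau> 1) else 0) * ?D"
      unfolding D detv by simp
  next
    show "phiE ?E ?D = ?D"
      unfolding D by (simp add: phi_hom.hom_minus phi_vS phi_vT)
    show "?D \<noteq> 0" unfolding D using mvar_diff_nz[OF v_ne(1)[of 1 1]] by simp
    show "Zsf ?E \<inter> st_vars 2 = {}" "Osf ?E \<inter> st_vars 2 = {}" by (rule ZO_st)+
  next
    fix cb rb assume cb: "cb < nblocks 2 \<tau>" and rb: "rb < nblocks 2 \<tau>"
    have cb': "cb < \<tau> 1" and rb': "rb < \<tau> 1" using cb rb K by auto
    have e0: "{1..<1::nat} = {}" by auto
    have se: "s_exp 2 \<tau> cb 1 = cb" using cb' by (simp add: s_exp_def e0)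
    have te: "t_exp 2 \<tau> rb 1 = rb" using rb' by (simp add: t_exp_def e0)
    show "coeff_st 2 (G1 (\<tau> 1)) (s_exp 2 \<tau> cb) (t_exp 2 \<tau> rb) = (if cb = \<tau> 1 - Suc rb then 1 else 0)"
      unfolding coeff_G1 se te using cb' rb' by auto
  next
    fix rb assume rb: "rb < nblocks 2 \<tau>"
    show "\<tau> 1 - Suc rb < nblocks 2 \<tau>" unfolding K using t1 by simp
    show "(1::mpoly) * 1 = 1" by simp
  next
    show "inj_on (\<lambda>rb. \<tau> 1 - Suc rb) {..<nblocks 2 \<tau>}" unfolding K by (rule inj_onI) auto
  qed
qed


lemma kbd1_entry:
  fixes M :: "nat \<Rightarrow> nat \<Rightarrow> 'a::comm_ring_1 mat"
  assumes carr: "\<And>k j. M k j \<in> carrier_mat (m k) (m k)"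
    and ij: "i < m 0" "j < m 0"
  shows "kron_block_det 1 m M $$ (i, j) = M 0 0 $$ (i, j)"
proof -
  have l1: "{..<1::nat} = {0}" by auto
  have d: "dim_row (M k x) = m k" "dim_col (M k x) = m k" for k x using carr[of k x] by auto
  have kl: "kron_list [M 0 a] $$ (i, j) = M 0 a $$ (i, j)" for a
  proof -
    have dims: "\<forall>A\<in>set [M 0 a]. dim_col A = dim_row A" by (simp add: d)
    have "kron_list [M 0 a] $$ (i, j) = kentry [M 0 a] i j"
      using kron_list_props[OF dims] ij d by auto
    then show ?thesis by simp
  qed
  have "kron_block_det 1 m M $$ (i, j) =
      (\<Sum>\<sigma> | \<sigma> permutes {..<1::nat}. of_int (sign \<sigma>) * (\<lambda>a. kron_list [M 0 a] $$ (i, j)) (\<sigma> 0))"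
    using ij by (simp add: kron_block_det_def l1 upt_rec)
  also have "\<dots> = M 0 0 $$ (i, j)" by (subst perm_sum_1) (simp add: kl)
  finally show ?thesis .
qed

definition E1 :: "(nat \<times> nat list) set" where "E1 = {(1, [0])}"

theorem case1:
  fixes \<tau> n :: "nat \<Rightarrow> nat"
  assumes npos: "\<forall>k\<in>{1..1}. 0 < n k"
  shows "det (dixon_resultant 1 \<tau> n) \<noteq> 0"
proof -
  let ?B = "kron_block_det 1 (\<lambda>i. n (Suc i)) (Mdixon 1 \<tau> n)"
  let ?D = "\<Prod>k\<in>{1..<1}. mvar (vS k) - mvar (vT k)"
  have D: "?D = 1" by simp
  have N: "Nsize 1 n = n 1" by (simp add: Nsize_def)
  have K: "nblocks 1 \<tau> = 1" by (simp add: nblocks_def)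
  have MI: "{e. (Suc k, e) \<in> E1} \<subseteq> multi_indices 1 \<tau>" for k
    by (auto simp: E1_def multi_indices_def)
  have sp: "specv 1 E1 0 0 = 1"
  proof -
    have "{e. (Suc 0, e) \<in> E1} = {[0]}" by (auto simp: E1_def)
    then show ?thesis by (simp add: specv_def)
  qed
  have Bij: "?B $$ (i, j) = Mdixon 1 \<tau> n 0 0 $$ (i, j)" if "i < n 1" "j < n 1" for i j
    using kbd1_entry[where m = "\<lambda>i. n (Suc i)" and M = "Mdixon 1 \<tau> n", of i j] that
    by (simp add: Mdixon_carrier One_nat_def[symmetric])
  show ?thesis
  proof (rule reduction[where Zs = "Zsf E1" and Os = "Osf E1" and \<delta> = 1
        and \<sigma> = "\<lambda>rb. rb" and \<epsilon> = "\<lambda>rb. 1"])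
    fix i j assume "i < Nsize 1 n" "j < Nsize 1 n"
    show "\<exists>q. ?B $$ (i, j) = q * ?D" by (simp add: D)
  next
    fix i j assume i: "i < Nsize 1 n" and j: "j < Nsize 1 n"
    have ij: "i < n (Suc 0)" "j < n (Suc 0)" using i j N by (auto simp: One_nat_def)
    have "phiE E1 (Mdixon 1 \<tau> n 0 0 $$ (i, j)) = (if i = j then specv 1 E1 0 0 else 0)"
      by (rule phi_Mdixon[where d = 1 and a = i and b = j and n = n and k = 0 and E = E1 and \<tau> = \<tau> and j = 0, OF _ ij MI]) simp
    then show "phiE E1 (?B $$ (i, j)) = (if i = j then 1 else 0) * ?D"
      using Bij i j N sp by simp
  next
    show "phiE E1 ?D = ?D" by (simp add: phi_hom.hom_one)
    show "?D \<noteq> 0" by simp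
    show "Zsf E1 \<inter> st_vars 1 = {}" "Osf E1 \<inter> st_vars 1 = {}" by (rule ZO_st)+
  next
    fix cb rb assume cb: "cb < nblocks 1 \<tau>" and rb: "rb < nblocks 1 \<tau>"
    have c: "coeff_st 1 1 a b = 1" for a b
    proof -
      have st: "strip_st 1 0 = 0" by (simp add: strip_st_def)
      have "coeff_st 1 (Poly_Mapping.single 0 1) a b = 1"
        unfolding coeff_st_single cf_def st by (simp add: condst_def)
      then show ?thesis by simp
    qed
    show "coeff_st 1 1 (s_exp 1 \<tau> cb) (t_exp 1 \<tau> rb) = (if cb = rb then 1 else 0)"
      using cb rb K by (simp add: c)
  next
    fix rb assume "rb < nblocks 1 \<tau>"
    then show "rb < nblocks 1 \<tau>" .
    show "(1::mpoly) * 1 = 1" by simp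
  next
    show "inj_on (\<lambda>rb. rb) {..<nblocks 1 \<tau>}" by simp
  qed
qed


theorem theorem4p3:
  fixes d :: nat and \<tau> n :: "nat \<Rightarrow> nat"
  assumes "1 \<le> d" and "d \<le> 3"
    and "\<forall>k\<in>{1..d}. 0 < \<tau> k" and "\<forall>k\<in>{1..d}. 0 < n k"
  shows "det (dixon_resultant d \<tau> n) \<noteq> 0"
proof -
  have "d = 1 \<or> d = 2 \<or> d = 3" using assms(1,2) by arith
  then show ?thesis
  proof (elim disjE)
    assume d: "d = 1"
    show ?thesis unfolding d by (rule case1) (use assms(4) d in simp)
  next
    assume d: "d = 2"
    show ?thesis unfolding d by (rule case2) (use assms(3,4) d in simp_all)
  next
    assume d: "d = 3"
    show ?thesis unfolding d by (rule case3) (use assms(3,4) d in simp_all)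
  qed
qed

end
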